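(* Every smooth irreducible genuine $k$-representation of $\widetilde T$ is finite-dimensional.
   Context: Let $p$ be an odd prime and $k$ an algebraically closed field of characteristic $p$. Let $G=\mathrm{GL}_2(\mathbb{Q}_p)$, $v$ the $p$-adic valuation, $\mu_2=\{\pm1\}$, $\omega\colon\mathbb{Q}_p^\times\to\mathbb{F}_p^\times$, $x\mapsto (xp^{-v(x)}\bmod p)$, Hilbert symbol $(a,b)=\omega\big((-1)^{v(a)v(b)}b^{v(a)}/a^{v(b)}\big)^{(p-1)/2}$. For $g=\begin{pmatrix}a&b\\c&d\end{pmatrix}$ put $\mathfrak c(g)=c$ if $c\neq0$, $\mathfrak c(g)=d$ if $c=0$. The metaplectic cover $\widetilde G$ is $G\times\mu_2$ with $(g_1,\zeta_1)(g_2,\zeta_2)=(g_1g_2,\zeta_1\zeta_2\sigma(g_1,g_2))$, $\sigma(g_1,g_2)=\big(\mathfrak c(g_1g_2)/\mathfrak c(g_1),\ \det(g_1)\mathfrak c(g_1g_2)/\mathfrak c(g_2)\big)$. $T$ is the diagonal torus and $\widetilde T$ its preimage in $\widetilde G$. $\iota\colon\mu_2\to k^\times$ is the nontrivial character; genuine means $\mu_2$ acts through $\iota$. *)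

theory Defs
  imports Main "HOL-Computational_Algebra.Polynomial"
begin

text \<open>p-adic integers Z_p as compatible sequences of residues modulo p^n.\<close>

type_synonym zp = "nat \<Rightarrow> int"

definition zp_carrier :: "int \<Rightarrow> zp set" where
  "zp_carrier p = {x. \<forall>n. 0 \<le> x n \<and> x n < p ^ n \<and> x n = x (Suc n) mod p ^ n}"

definition zp_units :: "int \<Rightarrow> zp set" where
  "zp_units p = {x \<in> zp_carrier p. x 1 \<noteq> 0}"

definition zp_mul :: "int \<Rightarrow> zp \<Rightarrow> zp \<Rightarrow> zp" where
  "zp_mul p x y = (\<lambda>n. (x n * y n) mod p ^ n)"

definition zp_inv :: "int \<Rightarrow> zp \<Rightarrow> zp" where
  "zp_inv p x = (\<lambda>n. THE y. 0 \<le> y \<and> y < p ^ n \<and> (x n * y) mod p ^ n = 1 mod p ^ n)"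

text \<open>The multiplicative group Q_p^x, realised as p^Z x Z_p^x: the pair (m, u) stands for p^m u.\<close>

type_synonym qpx = "int \<times> zp"

definition qpx_carrier :: "int \<Rightarrow> qpx set" where
  "qpx_carrier p = {(m, u). u \<in> zp_units p}"

definition qmul :: "int \<Rightarrow> qpx \<Rightarrow> qpx \<Rightarrow> qpx" where
  "qmul p x y = (fst x + fst y, zp_mul p (snd x) (snd y))"

definition qinv :: "int \<Rightarrow> qpx \<Rightarrow> qpx" where
  "qinv p x = (- fst x, zp_inv p (snd x))"

definition qone :: "int \<Rightarrow> qpx" where
  "qone p = (0, \<lambda>n. 1 mod p ^ n)"

definition qminus_one :: "int \<Rightarrow> qpx" where
  "qminus_one p = (0, \<lambda>n. p ^ n - 1)"

definition qpow :: "int \<Rightarrow> qpx \<Rightarrow> int \<Rightarrow> qpx" where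
  "qpow p x k = (if 0 \<le> k then ((qmul p x) ^^ nat k) (qone p)
                 else qinv p (((qmul p x) ^^ nat (- k)) (qone p)))"

text \<open>p-adic valuation v and omega(x) = (x p^{-v(x)} mod p), as an integer residue in {0..p-1}.\<close>

definition pval :: "qpx \<Rightarrow> int" where
  "pval x = fst x"

definition omega :: "qpx \<Rightarrow> int" where
  "omega x = snd x 1"

text \<open>Hilbert symbol (a,b) = omega((-1)^{v(a)v(b)} b^{v(a)} / a^{v(b)})^{(p-1)/2} in F_p^x,
  which lies in {1,-1}; we return it as the integer 1 or -1 (the group mu_2).\<close>

definition hilbert :: "int \<Rightarrow> qpx \<Rightarrow> qpx \<Rightarrow> int" where
  "hilbert p a b =
     (let x = qmul p (qpow p (qminus_one p) (pval a * pval b))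
                     (qmul p (qpow p b (pval a)) (qinv p (qpow p a (pval b))))
      in if (omega x ^ nat ((p - 1) div 2)) mod p = 1 then 1 else -1)"

text \<open>Elements of the metaplectic torus T~: ((a, d), zeta) stands for (diag(a,d), zeta) in G x mu_2.
  For diagonal g the entry c is 0, so c-frak(g) = d, and det g = a d.  The cocycle is
  sigma(g1,g2) = (c(g1g2)/c(g1), det(g1) c(g1g2)/c(g2)).\<close>

type_synonym ttilde = "(qpx \<times> qpx) \<times> int"

definition tt_carrier :: "int \<Rightarrow> ttilde set" where
  "tt_carrier p = {((a, d), z). a \<in> qpx_carrier p \<and> d \<in> qpx_carrier p \<and> z \<in> {1, -1}}"

definition tt_sigma :: "int \<Rightarrow> qpx \<times> qpx \<Rightarrow> qpx \<times> qpx \<Rightarrow> int" where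
  "tt_sigma p g1 g2 =
     (let (a1, d1) = g1; (a2, d2) = g2; c12 = qmul p d1 d2
      in hilbert p (qmul p c12 (qinv p d1))
                   (qmul p (qmul p (qmul p a1 d1) c12) (qinv p d2)))"

definition tt_mul :: "int \<Rightarrow> ttilde \<Rightarrow> ttilde \<Rightarrow> ttilde" where
  "tt_mul p x y =
     (let ((a1, d1), z1) = x; ((a2, d2), z2) = y
      in ((qmul p a1 a2, qmul p d1 d2), z1 * z2 * tt_sigma p (a1, d1) (a2, d2)))"

definition tt_one :: "int \<Rightarrow> ttilde" where
  "tt_one p = ((qone p, qone p), 1)"

text \<open>Neighbourhood basis of the identity of T~ (topology of G x mu_2):
  K_n = {(diag(a,d), 1) : a, d \<in> 1 + p^n Z_p}.\<close>

definition tt_K :: "int \<Rightarrow> nat \<Rightarrow> ttilde set" where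
  "tt_K p n = {((a, d), 1) | a d. a \<in> qpx_carrier p \<and> d \<in> qpx_carrier p \<and>
                 fst a = 0 \<and> fst d = 0 \<and> snd a n = 1 mod p ^ n \<and> snd d n = 1 mod p ^ n}"

text \<open>Representations of T~ on a k-vector space V (scalar multiplication scale).\<close>

definition is_rep :: "int \<Rightarrow> ('k::field \<Rightarrow> 'v::ab_group_add \<Rightarrow> 'v) \<Rightarrow> (ttilde \<Rightarrow> 'v \<Rightarrow> 'v) \<Rightarrow> bool" where
  "is_rep p scale \<rho> \<longleftrightarrow>
     (\<forall>g \<in> tt_carrier p. Vector_Spaces.linear scale scale (\<rho> g)) \<and>
     \<rho> (tt_one p) = id \<and>
     (\<forall>g \<in> tt_carrier p. \<forall>h \<in> tt_carrier p. \<rho> (tt_mul p g h) = \<rho> g \<circ> \<rho> h)"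

definition smooth_rep :: "int \<Rightarrow> (ttilde \<Rightarrow> 'v \<Rightarrow> 'v) \<Rightarrow> bool" where
  "smooth_rep p \<rho> \<longleftrightarrow> (\<forall>w. \<exists>n. \<forall>t \<in> tt_K p n. \<rho> t w = w)"

text \<open>Genuine: mu_2 acts through the nontrivial character iota, iota(-1) = -1.\<close>

definition genuine_rep :: "int \<Rightarrow> ('k::field \<Rightarrow> 'v::ab_group_add \<Rightarrow> 'v) \<Rightarrow> (ttilde \<Rightarrow> 'v \<Rightarrow> 'v) \<Rightarrow> bool" where
  "genuine_rep p scale \<rho> \<longleftrightarrow> (\<forall>w. \<rho> ((qone p, qone p), -1) w = scale (-1) w)"

definition irreducible_rep :: "int \<Rightarrow> ('k::field \<Rightarrow> 'v::ab_group_add \<Rightarrow> 'v) \<Rightarrow> (ttilde \<Rightarrow> 'v \<Rightarrow> 'v) \<Rightarrow> bool" where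
  "irreducible_rep p scale \<rho> \<longleftrightarrow>
     (\<exists>w::'v. w \<noteq> 0) \<and>
     (\<forall>S. module.subspace scale S \<and> (\<forall>g \<in> tt_carrier p. \<forall>w \<in> S. \<rho> g w \<in> S)
          \<longrightarrow> S = {0} \<or> S = UNIV)"

definition finite_dim :: "('k::field \<Rightarrow> 'v::ab_group_add \<Rightarrow> 'v) \<Rightarrow> bool" where
  "finite_dim scale \<longleftrightarrow> (\<exists>B. finite B \<and> module.span scale B = UNIV)"

definition alg_closed :: "'k::field itself \<Rightarrow> bool" where
  "alg_closed _ \<longleftrightarrow> (\<forall>q :: 'k poly. 0 < degree q \<longrightarrow> (\<exists>x. poly q x = 0))"

end

theory Submission
  imports Defs "HOL-Number_Theory.Residues" "Jordan_Normal_Form.Determinant"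
begin

(* ---- Core1 ---- *)


locale ract =
  fixes A :: "'r::comm_ring_1 \<Rightarrow> 'v::ab_group_add \<Rightarrow> 'v"
  assumes A_add: "A (a + b) v = A a v + A b v"
    and A_mult: "A (a * b) v = A a (A b v)"
    and A_one: "A 1 v = v"
    and A_vadd: "A a (v + w) = A a v + A a w"
begin

lemma A_zero[simp]: "A 0 v = 0"
  using A_add[of 0 0 v] by simp

lemma A_vzero[simp]: "A a 0 = 0"
  using A_vadd[of a 0 0] by simp

lemma A_uminus: "A (- a) v = - A a v"
proof -
  have "A a v + A (- a) v = 0" using A_add[of a "-a" v] by simp
  thus ?thesis by (simp add: add_eq_0_iff)
qed

lemma A_diff: "A (a - b) v = A a v - A b v"
  using A_add[of a "-b" v] A_uminus[of b v] by simp

lemma A_vuminus: "A a (- v) = - A a v"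
proof -
  have "A a v + A a (- v) = 0" using A_vadd[of a v "-v"] by simp
  thus ?thesis by (simp add: add_eq_0_iff)
qed

lemma A_vdiff: "A a (v - w) = A a v - A a w"
  using A_vadd[of a v "-w"] A_vuminus[of a w] by simp

lemma A_sum: "A (\<Sum>i\<in>S. f i) v = (\<Sum>i\<in>S. A (f i) v)"
  by (induction S rule: infinite_finite_induct) (auto simp: A_add)

lemma A_vsum: "A a (\<Sum>i\<in>S. f i) = (\<Sum>i\<in>S. A a (f i))"
  by (induction S rule: infinite_finite_induct) (auto simp: A_vadd)

lemma A_comm: "A a (A b v) = A b (A a v)"
  by (metis A_mult mult.commute)

lemma A_pow_inj: assumes "\<And>v. A s v = 0 \<Longrightarrow> v = 0" shows "A (s ^ E) v = 0 \<Longrightarrow> v = 0"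
proof (induction E arbitrary: v)
  case 0 thus ?case by (simp add: A_one)
next
  case (Suc E)
  have "A s (A (s ^ E) v) = 0" using Suc.prems by (simp add: A_mult)
  hence "A (s ^ E) v = 0" by (rule assms)
  thus ?case by (rule Suc.IH)
qed

definition Span :: "(nat \<Rightarrow> 'v) \<Rightarrow> nat \<Rightarrow> 'v set" where
  "Span u n = {w. \<exists>r. w = (\<Sum>i<n. A (r i) (u i))}"

lemma Span_zero: "0 \<in> Span u n"
  unfolding Span_def by (rule CollectI, rule exI[of _ "\<lambda>_. 0"]) simp

lemma Span_add: "a \<in> Span u n \<Longrightarrow> b \<in> Span u n \<Longrightarrow> a + b \<in> Span u n"
  unfolding Span_def
proof (clarsimp)
  fix r r' show "\<exists>r''. (\<Sum>i<n. A (r i) (u i)) + (\<Sum>i<n. A (r' i) (u i)) = (\<Sum>i<n. A (r'' i) (u i))"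
    by (rule exI[of _ "\<lambda>i. r i + r' i"]) (simp add: A_add sum.distrib)
qed

lemma Span_act: "a \<in> Span u n \<Longrightarrow> A q a \<in> Span u n"
  unfolding Span_def
proof (clarsimp)
  fix r show "\<exists>r''. A q (\<Sum>i<n. A (r i) (u i)) = (\<Sum>i<n. A (r'' i) (u i))"
    by (rule exI[of _ "\<lambda>i. q * r i"]) (simp add: A_vsum A_mult)
qed

lemma Span_gen: "i < n \<Longrightarrow> u i \<in> Span u n"
  unfolding Span_def
proof (rule CollectI, rule exI[of _ "\<lambda>j. if j = i then 1 else 0"])
  assume "i < n"
  have "(\<Sum>j<n. A (if j = i then 1 else 0) (u j)) = (\<Sum>j<n. if j = i then u j else 0)"
    by (rule sum.cong) (auto simp: A_one)
  also have "\<dots> = u i" using \<open>i < n\<close> by simp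
  finally show "u i = (\<Sum>j<n. A (if j = i then 1 else 0) (u j))" by simp
qed

lemma Span_sum: "(\<And>j. j \<in> S \<Longrightarrow> f j \<in> Span u n) \<Longrightarrow> (\<Sum>j\<in>S. f j) \<in> Span u n"
  by (induction S rule: infinite_finite_induct) (auto simp: Span_zero Span_add)

lemma Span_uminus: "a \<in> Span u n \<Longrightarrow> - a \<in> Span u n"
  using Span_act[of a u n "-1"] by (simp add: A_uminus A_one)

definition G :: "'r \<Rightarrow> (nat \<Rightarrow> 'v) \<Rightarrow> nat \<Rightarrow> 'v \<Rightarrow> bool" where
  "G s u n v \<longleftrightarrow> (\<exists>E. A (s ^ E) v \<in> Span u n)"

lemma G_gen: "i < n \<Longrightarrow> G s u n (u i)"
  unfolding G_def by (rule exI[of _ 0]) (simp add: A_one Span_gen)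

lemma G_zero: "G s u n 0"
  unfolding G_def by (auto simp: Span_zero)

lemma G_add: assumes "G s u n a" "G s u n b" shows "G s u n (a + b)"
proof -
  obtain E1 E2 where e: "A (s ^ E1) a \<in> Span u n" "A (s ^ E2) b \<in> Span u n"
    using assms unfolding G_def by blast
  have "A (s ^ (E1 + E2)) (a + b) = A (s ^ E2) (A (s ^ E1) a) + A (s ^ E1) (A (s ^ E2) b)"
    by (simp add: A_vadd power_add A_mult A_comm)
  also have "\<dots> \<in> Span u n" by (rule Span_add[OF Span_act[OF e(1)] Span_act[OF e(2)]])
  finally show ?thesis unfolding G_def by blast
qed

lemma G_act: assumes "G s u n a" shows "G s u n (A q a)"
proof -
  obtain E where e: "A (s ^ E) a \<in> Span u n" using assms unfolding G_def by blast
  have "A (s ^ E) (A q a) = A q (A (s ^ E) a)" by (simp add: A_comm)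
  also have "\<dots> \<in> Span u n" by (rule Span_act[OF e])
  finally show ?thesis unfolding G_def by blast
qed

lemma G_T:
  assumes "G s u n a"
    and Tadd: "\<And>x y. T (x + y) = T x + T y"
    and Tcomm: "\<And>r x. T (A r x) = A r (T x)"
    and Tgen: "\<And>i. i < n \<Longrightarrow> A s (T (u i)) \<in> Span u n"
  shows "G s u n (T a)"
proof -
  obtain E r where e: "A (s ^ E) a = (\<Sum>i<n. A (r i) (u i))" using assms unfolding G_def Span_def by blast
  have T0: "T 0 = 0" using Tadd[of 0 0] by simp
  have Tsum: "T (\<Sum>i\<in>S. f i) = (\<Sum>i\<in>S. T (f i))" for S and f :: "nat \<Rightarrow> 'v"
    by (induction S rule: infinite_finite_induct) (auto simp: Tadd T0)
  have "A (s ^ Suc E) (T a) = A s (T (A (s ^ E) a))" by (simp add: A_mult Tcomm)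
  also have "\<dots> = (\<Sum>i<n. A (r i) (A s (T (u i))))" unfolding e Tsum A_vsum
    by (simp add: Tcomm A_comm)
  also have "\<dots> \<in> Span u n" by (intro Span_sum Span_act Tgen) simp
  finally show ?thesis unfolding G_def by blast
qed

lemma G_kill:
  assumes "G s u n v" "\<And>i. i < n \<Longrightarrow> A d (u i) = 0" "\<And>v. A s v = 0 \<Longrightarrow> v = 0"
  shows "A d v = 0"
proof -
  obtain E r where e: "A (s ^ E) v = (\<Sum>i<n. A (r i) (u i))" using assms unfolding G_def Span_def by blast
  have "A (s ^ E) (A d v) = A d (\<Sum>i<n. A (r i) (u i))" by (simp add: A_comm e[symmetric])
  also have "\<dots> = 0" unfolding A_vsum
  proof (rule sum.neutral, rule ballI)
    fix i assume "i \<in> {..<n}"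
    thus "A d (A (r i) (u i)) = 0" using A_comm[of d "r i" "u i"] assms(2)[of i] by simp
  qed
  finally show ?thesis using A_pow_inj[OF assms(3)] by blast
qed

lemma G_uniform:
  fixes z :: "nat \<Rightarrow> 'v"
  assumes "\<And>i. i < m \<Longrightarrow> G s u n (z i)"
  shows "\<exists>E rr. \<forall>i<m. A (s ^ E) (z i) = (\<Sum>j<n. A (rr i j) (u j))"
proof -
  obtain Ef where Ef: "\<And>i. i < m \<Longrightarrow> A (s ^ Ef i) (z i) \<in> Span u n"
    using assms unfolding G_def by metis
  define E where "E = (\<Sum>i<m. Ef i)"
  have "\<forall>i<m. A (s ^ E) (z i) \<in> Span u n"
  proof (intro allI impI)
    fix i assume i: "i < m"
    have le: "Ef i \<le> E" unfolding E_def by (rule member_le_sum) (use i in auto)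
    have "A (s ^ E) (z i) = A (s ^ (E - Ef i)) (A (s ^ Ef i) (z i))"
      using le by (simp add: A_mult[symmetric] power_add[symmetric])
    also have "\<dots> \<in> Span u n" using Ef[OF i] by (rule Span_act)
    finally show "A (s ^ E) (z i) \<in> Span u n" .
  qed
  hence "\<forall>i<m. \<exists>r. A (s ^ E) (z i) = (\<Sum>j<n. A (r j) (u j))" unfolding Span_def by blast
  then obtain rr where "\<forall>i<m. A (s ^ E) (z i) = (\<Sum>j<n. A (rr i j) (u j))" by metis
  thus ?thesis by blast
qed

text \<open>Determinant trick.\<close>

lemma DT:
  assumes M: "M \<in> carrier_mat n n"
    and rel: "\<And>i. i < n \<Longrightarrow> A c (u i) = (\<Sum>j<n. A (M $$ (i,j)) (u j))"
  shows "\<And>i. i < n \<Longrightarrow> A (det (c \<cdot>\<^sub>m 1\<^sub>m n - M)) (u i) = 0"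
proof -
  define B where "B = c \<cdot>\<^sub>m 1\<^sub>m n - M"
  have B: "B \<in> carrier_mat n n" unfolding B_def using M by auto
  have Bent: "B $$ (i,j) = (if i = j then c else 0) - M $$ (i,j)" if "i < n" "j < n" for i j
    unfolding B_def using M that by auto
  have B0: "(\<Sum>j<n. A (B $$ (l,j)) (u j)) = 0" if l: "l < n" for l
  proof -
    have "(\<Sum>j<n. A (B $$ (l,j)) (u j)) = (\<Sum>j<n. A (if l = j then c else 0) (u j)) - (\<Sum>j<n. A (M $$ (l,j)) (u j))"
      by (simp add: Bent l A_diff sum_subtractf)
    also have "(\<Sum>j<n. A (if l = j then c else 0) (u j)) = (\<Sum>j<n. if l = j then A c (u j) else 0)"
      by (rule sum.cong) auto
    also have "\<dots> = A c (u l)" using l by simp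
    finally show ?thesis using rel[OF l] by simp
  qed
  have adj: "adj_mat B * B = det B \<cdot>\<^sub>m 1\<^sub>m n" using adj_mat[OF B] by simp
  have adjc: "adj_mat B \<in> carrier_mat n n" using adj_mat[OF B] by simp
  fix i assume i: "i < n"
  have "(\<Sum>j<n. A ((adj_mat B * B) $$ (i,j)) (u j)) = (\<Sum>j<n. \<Sum>l<n. A (adj_mat B $$ (i,l)) (A (B $$ (l,j)) (u j)))"
  proof (rule sum.cong[OF refl])
    fix j assume "j \<in> {..<n}"
    hence j: "j < n" by simp
    have "(adj_mat B * B) $$ (i,j) = (\<Sum>l<n. adj_mat B $$ (i,l) * B $$ (l,j))"
      using adjc B i j by (simp add: scalar_prod_def atLeast0LessThan)
    thus "A ((adj_mat B * B) $$ (i,j)) (u j) = (\<Sum>l<n. A (adj_mat B $$ (i,l)) (A (B $$ (l,j)) (u j)))"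
      by (simp add: A_sum A_mult)
  qed
  also have "\<dots> = (\<Sum>l<n. A (adj_mat B $$ (i,l)) (\<Sum>j<n. A (B $$ (l,j)) (u j)))"
    by (subst sum.swap) (simp add: A_vsum)
  also have "\<dots> = 0" by (simp add: B0)
  finally have z: "(\<Sum>j<n. A ((adj_mat B * B) $$ (i,j)) (u j)) = 0" .
  have "(\<Sum>j<n. A ((adj_mat B * B) $$ (i,j)) (u j)) = (\<Sum>j<n. if i = j then A (det B) (u j) else 0)"
    by (rule sum.cong[OF refl]) (use i in \<open>auto simp: adj\<close>)
  also have "\<dots> = A (det B) (u i)" using i by simp
  finally show "A (det (c \<cdot>\<^sub>m 1\<^sub>m n - M)) (u i) = 0" using z B_def by simp
qed

lemma DT2:
  assumes z: "\<And>i. i < n \<Longrightarrow> A \<pi> (z i) = u i"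
    and rr: "\<And>i. i < n \<Longrightarrow> A (s ^ E) (z i) = (\<Sum>j<n. A (rr i j) (u j))"
  shows "\<And>i. i < n \<Longrightarrow> A (det ((s ^ E) \<cdot>\<^sub>m 1\<^sub>m n - mat n n (\<lambda>(i,j). \<pi> * rr i j))) (u i) = 0"
proof (rule DT)
  show "mat n n (\<lambda>(i,j). \<pi> * rr i j) \<in> carrier_mat n n" by simp
  fix i assume i: "i < n"
  have "A (s ^ E) (u i) = A \<pi> (A (s ^ E) (z i))" using z[OF i] by (metis A_comm)
  also have "\<dots> = (\<Sum>j<n. A (\<pi> * rr i j) (u j))" by (simp add: rr[OF i] A_vsum A_mult)
  finally show "A (s ^ E) (u i) = (\<Sum>j<n. A (mat n n (\<lambda>(i,j). \<pi> * rr i j) $$ (i,j)) (u j))"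
    using i by simp
qed

end

lemma det_hom_eval:
  assumes "comm_ring_hom h" "h \<pi> = 0"
  shows "h (det (c \<cdot>\<^sub>m 1\<^sub>m n - mat n n (\<lambda>(i,j). \<pi> * r i j))) = h c ^ n"
proof -
  interpret comm_ring_hom h by fact
  have e1: "h (c - \<pi> * x) = h c" for x by (simp only: hom_minus hom_mult assms(2) mult_zero_left diff_zero)
  have e2: "h (- (\<pi> * x)) = 0" for x by (simp only: hom_uminus hom_mult assms(2) mult_zero_left minus_zero)
  have "map_mat h (c \<cdot>\<^sub>m 1\<^sub>m n - mat n n (\<lambda>(i,j). \<pi> * r i j)) = h c \<cdot>\<^sub>m 1\<^sub>m n"
    by (rule eq_matI) (auto simp: e1 e2)
  hence "det (map_mat h (c \<cdot>\<^sub>m 1\<^sub>m n - mat n n (\<lambda>(i,j). \<pi> * r i j))) = h c ^ n" by simp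
  thus ?thesis by simp
qed


(* ---- Core2 ---- *)


definition pact :: "('r::comm_ring_1 \<Rightarrow> 'v::ab_group_add \<Rightarrow> 'v) \<Rightarrow> ('v \<Rightarrow> 'v) \<Rightarrow> 'r poly \<Rightarrow> 'v \<Rightarrow> 'v" where
  "pact A Z P v = (\<Sum>i\<le>Polynomial.degree P. A (Polynomial.coeff P i) ((Z ^^ i) v))"

locale pext = ract A for A :: "'r::comm_ring_1 \<Rightarrow> 'v::ab_group_add \<Rightarrow> 'v" +
  fixes Z :: "'v \<Rightarrow> 'v"
  assumes Z_add: "Z (v + w) = Z v + Z w"
    and Z_comm: "Z (A a v) = A a (Z v)"
begin

lemma Z0: "Z 0 = 0"
  using Z_add[of 0 0] by simp

lemma Zsum: "Z (\<Sum>i\<in>S. f i) = (\<Sum>i\<in>S. Z (f i))"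
  by (induction S rule: infinite_finite_induct) (auto simp: Z_add Z0)

lemma Zpow_add: "(Z ^^ i) (v + w) = (Z ^^ i) v + (Z ^^ i) w"
  by (induction i) (auto simp: Z_add)

lemma Zpow_comm: "(Z ^^ i) (A a v) = A a ((Z ^^ i) v)"
  by (induction i) (auto simp: Z_comm)

lemma pact_bound:
  assumes "Polynomial.degree P \<le> N"
  shows "pact A Z P v = (\<Sum>i\<le>N. A (Polynomial.coeff P i) ((Z ^^ i) v))"
  unfolding pact_def
  by (rule sum.mono_neutral_left) (use assms in \<open>auto simp: coeff_eq_0\<close>)

lemma pact_add: "pact A Z (P + Q) v = pact A Z P v + pact A Z Q v"
proof -
  define N where "N = max (Polynomial.degree P) (Polynomial.degree Q)"
  have "Polynomial.degree (P + Q) \<le> N" unfolding N_def by (rule degree_add_le) auto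
  hence "pact A Z (P + Q) v = (\<Sum>i\<le>N. A (Polynomial.coeff (P + Q) i) ((Z ^^ i) v))" by (rule pact_bound)
  also have "\<dots> = (\<Sum>i\<le>N. A (Polynomial.coeff P i) ((Z ^^ i) v)) + (\<Sum>i\<le>N. A (Polynomial.coeff Q i) ((Z ^^ i) v))"
    by (simp add: A_add sum.distrib)
  also have "\<dots> = pact A Z P v + pact A Z Q v"
    by (simp add: pact_bound[symmetric] N_def)
  finally show ?thesis .
qed

lemma pact_zero[simp]: "pact A Z 0 v = 0"
  unfolding pact_def by simp

lemma pact_pCons: "pact A Z (pCons a P) v = A a v + Z (pact A Z P v)"
proof -
  have "pact A Z (pCons a P) v = (\<Sum>i\<le>Suc (Polynomial.degree P). A (Polynomial.coeff (pCons a P) i) ((Z ^^ i) v))"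
    by (rule pact_bound) (rule degree_pCons_le)
  also have "\<dots> = A a v + (\<Sum>i\<le>Polynomial.degree P. A (Polynomial.coeff P i) ((Z ^^ Suc i) v))"
    by (subst sum.atMost_Suc_shift) simp
  also have "(\<Sum>i\<le>Polynomial.degree P. A (Polynomial.coeff P i) ((Z ^^ Suc i) v)) = Z (pact A Z P v)"
    unfolding pact_def Zsum by (simp add: Z_comm)
  finally show ?thesis .
qed

lemma pact_const: "pact A Z [:a:] v = A a v"
  by (simp add: pact_pCons Z0)

lemma pact_X: "pact A Z [:0, 1:] v = Z v"
  by (simp add: pact_pCons pact_const A_one Z0)

lemma pact_smult: "pact A Z (Polynomial.smult a Q) v = A a (pact A Z Q v)"
proof -
  have "pact A Z (Polynomial.smult a Q) v = (\<Sum>i\<le>Polynomial.degree Q. A (Polynomial.coeff (Polynomial.smult a Q) i) ((Z ^^ i) v))"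
    by (rule pact_bound) (rule degree_smult_le)
  also have "\<dots> = A a (pact A Z Q v)"
    unfolding pact_def A_vsum by (simp add: A_mult)
  finally show ?thesis .
qed

lemma pact_mult: "pact A Z (P * Q) v = pact A Z P (pact A Z Q v)"
proof (induction P arbitrary: v rule: pCons_induct)
  case 0 thus ?case by simp
next
  case (pCons a P)
  have "pact A Z (pCons a P * Q) v = pact A Z (Polynomial.smult a Q + pCons 0 (P * Q)) v" by simp
  also have "\<dots> = A a (pact A Z Q v) + Z (pact A Z P (pact A Z Q v))"
    by (simp add: pact_add pact_smult pact_pCons pCons.IH)
  also have "\<dots> = pact A Z (pCons a P) (pact A Z Q v)" by (simp add: pact_pCons)
  finally show ?case .
qed

lemma pact_one: "pact A Z 1 v = v"
  using pact_const[of 1 v] by (simp add: A_one one_pCons)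

lemma pact_vadd: "pact A Z P (v + w) = pact A Z P v + pact A Z P w"
  unfolding pact_def by (simp add: Zpow_add A_vadd sum.distrib)

lemma pact_ract: "ract (pact A Z)"
  by unfold_locales (auto simp: pact_add pact_mult pact_one pact_vadd)

lemma pact_comm:
  assumes Tadd: "\<And>x y. T (x + y) = T x + T y"
    and TA: "\<And>a x. T (A a x) = A a (T x)" and TZ: "\<And>x. T (Z x) = Z (T x)"
  shows "T (pact A Z P v) = pact A Z P (T v)"
proof -
  have T0: "T 0 = 0" using Tadd[of 0 0] by simp
  have Tsum: "T (\<Sum>i\<in>S. f i) = (\<Sum>i\<in>S. T (f i))" for S and f :: "nat \<Rightarrow> 'v"
    by (induction S rule: infinite_finite_induct) (auto simp: Tadd T0)
  have TZi: "T ((Z ^^ i) x) = (Z ^^ i) (T x)" for i x by (induction i) (auto simp: TZ)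
  show ?thesis unfolding pact_def Tsum by (simp add: TA TZi)
qed

lemma pact_pred:
  assumes id: "Cen (\<lambda>v. v)" and zero: "Cen (\<lambda>v. 0)"
    and comp: "\<And>f g. Cen f \<Longrightarrow> Cen g \<Longrightarrow> Cen (\<lambda>v. f (g v))"
    and add: "\<And>f g. Cen f \<Longrightarrow> Cen g \<Longrightarrow> Cen (\<lambda>v. f v + g v)"
    and CA: "\<And>a. Cen (A a)" and CZ: "Cen Z"
  shows "Cen (pact A Z P)"
proof -
  have Zi: "Cen (Z ^^ i)" for i
  proof (induction i)
    case 0 thus ?case using id by (simp add: id_def)
  next
    case (Suc i)
    have "Cen (\<lambda>v. Z ((Z ^^ i) v))" by (rule comp[OF CZ Suc])
    thus ?case by (simp add: comp_def)
  qed
  have sumC: "Cen (\<lambda>v. \<Sum>i\<in>S. F i v)" if "\<And>i. Cen (F i)" for S and F :: "nat \<Rightarrow> 'v \<Rightarrow> 'v"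
  proof (induction S rule: infinite_finite_induct)
    case (infinite S) thus ?case using zero by simp
  next
    case empty thus ?case using zero by simp
  next
    case (insert x S) thus ?case using add[OF that[of x] insert.IH] by simp
  qed
  have "Cen (\<lambda>v. \<Sum>i\<le>Polynomial.degree P. A (Polynomial.coeff P i) ((Z ^^ i) v))"
    by (rule sumC) (rule comp[OF CA Zi])
  thus ?thesis unfolding pact_def[abs_def] by simp
qed

end

lemma poly_eval_hom: "comm_ring_hom (\<lambda>p. poly p x)"
  by unfold_locales (simp_all add: poly_mult)


(* ---- Core3 ---- *)


locale core =
  fixes scale :: "'k::field \<Rightarrow> 'v::ab_group_add \<Rightarrow> 'v"
    and X X' Y Y' :: "'v \<Rightarrow> 'v" and Cen :: "('v \<Rightarrow> 'v) \<Rightarrow> bool"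
    and u :: "nat \<Rightarrow> 'v" and N :: nat
  assumes vs: "vector_space scale"
    and X_add: "X (a + b) = X a + X b" and X_scale: "X (scale c a) = scale c (X a)"
    and X'_add: "X' (a + b) = X' a + X' b" and X'_scale: "X' (scale c a) = scale c (X' a)"
    and Y_add: "Y (a + b) = Y a + Y b" and Y_scale: "Y (scale c a) = scale c (Y a)"
    and Y'_add: "Y' (a + b) = Y' a + Y' b" and Y'_scale: "Y' (scale c a) = scale c (Y' a)"
    and XX': "X (X' a) = a" and X'X: "X' (X a) = a"
    and YY': "Y (Y' a) = a" and Y'Y: "Y' (Y a) = a"
    and XY: "X (Y a) = Y (X a)" and X'Y: "X' (Y a) = Y (X' a)"
    and XY': "X (Y' a) = Y' (X a)" and X'Y': "X' (Y' a) = Y' (X' a)"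
    and Cen_id: "Cen (\<lambda>v. v)" and Cen_zero: "Cen (\<lambda>v. 0)"
    and Cen_comp: "\<And>f g. Cen f \<Longrightarrow> Cen g \<Longrightarrow> Cen (\<lambda>v. f (g v))"
    and Cen_add: "\<And>f g. Cen f \<Longrightarrow> Cen g \<Longrightarrow> Cen (\<lambda>v. f v + g v)"
    and Cen_scale: "Cen (scale c)" and Cen_X: "Cen X" and Cen_Y: "Cen Y"
    and Schur: "\<And>C. Cen C \<Longrightarrow> (\<forall>v. C v = 0) \<or> ((\<forall>v. C v = 0 \<longrightarrow> v = 0) \<and> (\<forall>w. \<exists>v. C v = w))"
    and genH: "\<And>Pr v. (\<And>i. i < N \<Longrightarrow> Pr (u i)) \<Longrightarrow> (\<And>a b. Pr a \<Longrightarrow> Pr b \<Longrightarrow> Pr (a + b))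
        \<Longrightarrow> (\<And>c a. Pr a \<Longrightarrow> Pr (scale c a)) \<Longrightarrow> Pr 0
        \<Longrightarrow> (\<And>a. Pr a \<Longrightarrow> Pr (X a)) \<Longrightarrow> (\<And>a. Pr a \<Longrightarrow> Pr (X' a))
        \<Longrightarrow> (\<And>a. Pr a \<Longrightarrow> Pr (Y a)) \<Longrightarrow> (\<And>a. Pr a \<Longrightarrow> Pr (Y' a)) \<Longrightarrow> Pr v"
    and algc: "\<And>q::'k poly. 0 < Polynomial.degree q \<Longrightarrow> \<exists>x. poly q x = 0"
begin

interpretation vs: vector_space scale by (rule vs)

lemma ract_scale: "ract scale"
  by unfold_locales (simp_all add: vs.scale_left_distrib vs.scale_right_distrib)

lemma pext1: "pext scale X"
  by (intro pext.intro ract_scale) (unfold_locales, simp_all add: X_add X_scale)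

abbreviation act1 where "act1 \<equiv> pact scale X"
abbreviation act2 where "act2 \<equiv> pact act1 Y"

lemma ract1: "ract act1" using pext1 by (rule pext.pact_ract)

lemma Y_act1: "Y (act1 q v) = act1 q (Y v)"
  by (rule pext.pact_comm[OF pext1]) (simp_all add: Y_add Y_scale XY)

lemma X'_act1: "X' (act1 q v) = act1 q (X' v)"
  by (rule pext.pact_comm[OF pext1]) (simp_all add: X'_add X'_scale, metis XX' X'X)

lemma Y'_act1: "Y' (act1 q v) = act1 q (Y' v)"
  by (rule pext.pact_comm[OF pext1]) (simp_all add: Y'_add Y'_scale XY')

lemma pext2: "pext act1 Y"
  by (intro pext.intro ract1) (unfold_locales, simp_all add: Y_add Y_act1)

lemma ract2: "ract act2" using pext2 by (rule pext.pact_ract)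

lemma X_act1: "X (act1 q v) = act1 q (X v)"
  by (rule pext.pact_comm[OF pext1]) (simp_all add: X_add X_scale)

lemma X_act2: "X (act2 P v) = act2 P (X v)"
  by (rule pext.pact_comm[OF pext2]) (simp_all add: X_add X_act1 XY)

lemma X'_act2: "X' (act2 P v) = act2 P (X' v)"
  by (rule pext.pact_comm[OF pext2]) (simp_all add: X'_add X'_act1 X'Y)

lemma Y'_act2: "Y' (act2 P v) = act2 P (Y' v)"
  by (rule pext.pact_comm[OF pext2]) (simp_all add: Y'_add Y'_act1, metis YY' Y'Y)

lemma Cen_act1: "Cen (act1 q)"
  by (rule pext.pact_pred[OF pext1]) (simp_all add: Cen_id Cen_zero Cen_comp Cen_add Cen_scale Cen_X)

lemma Cen_act2: "Cen (act2 P)"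
  by (rule pext.pact_pred[OF pext2]) (simp_all add: Cen_id Cen_zero Cen_comp Cen_add Cen_act1 Cen_Y)

lemma act1_const: "act1 [:c:] v = scale c v"
  by (rule pext.pact_const[OF pext1])

lemma act1_X: "act1 [:0, 1:] v = X v"
  by (rule pext.pact_X[OF pext1])

lemma act2_const: "act2 [:q:] v = act1 q v"
  by (rule pext.pact_const[OF pext2])

lemma act2_Y: "act2 [:0, 1:] v = Y v"
  by (rule pext.pact_X[OF pext2])

lemma act1_mult: "act1 (p * q) v = act1 p (act1 q v)"
  by (rule pext.pact_mult[OF pext1])

lemma act2_mult: "act2 (p * q) v = act2 p (act2 q v)"
  by (rule pext.pact_mult[OF pext2])

lemma X_inj: "X v = 0 \<Longrightarrow> v = 0"
  by (metis X'X X_add add_cancel_right_right)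

lemma Y_inj: "Y v = 0 \<Longrightarrow> v = 0"
  by (metis Y'Y Y_add add_cancel_right_right)

lemma X'_zero: "X' 0 = 0" using X'_add[of 0 0] by simp
lemma Y'_zero: "Y' 0 = 0" using Y'_add[of 0 0] by simp

lemma surj_inv:
  assumes "\<forall>w. \<exists>v. C v = w" obtains f where "\<And>w. C (f w) = w"
  using assms by metis

text \<open>Step 1: Y is algebraic over k[X].\<close>

lemma step1: "\<exists>P. P \<noteq> 0 \<and> (\<forall>v. act2 P v = 0)"
proof -
  interpret r2: ract act2 by (rule ract2)
  define y1 :: "'k poly poly" where "y1 = [:-1, 1:]"
  have y1ne: "y1 \<noteq> 0" unfolding y1_def by simp
  show ?thesis
  proof (cases "\<forall>v. act2 y1 v = 0")
    case True thus ?thesis using y1ne by blast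
  next
    case False
    with Schur[OF Cen_act2[of y1]] have surj: "\<forall>w. \<exists>v. act2 y1 v = w" by blast
    then obtain f where f: "\<And>w. act2 y1 (f w) = w" by metis
    define s :: "'k poly poly" where "s = [:[:0, 1:]:] * [:0, 1:]"
    have act2s: "act2 s v = X (Y v)" for v
      unfolding s_def act2_mult act2_Y act2_const act1_X ..
    have Gall: "r2.G s u N v" for v
    proof (rule genH[of "r2.G s u N"])
      show "r2.G s u N (u i)" if "i < N" for i using that by (rule r2.G_gen)
      show "r2.G s u N (a + b)" if "r2.G s u N a" "r2.G s u N b" for a b
        using that by (rule r2.G_add)
      show "r2.G s u N 0" by (rule r2.G_zero)
      show "r2.G s u N (scale c a)" if "r2.G s u N a" for c a
        using r2.G_act[OF that, of "[:[:c:]:]"] by (simp add: act2_const act1_const)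
      show "r2.G s u N (X a)" if "r2.G s u N a" for a
        using r2.G_act[OF that, of "[:[:0,1:]:]"] by (simp add: act2_const act1_X)
      show "r2.G s u N (Y a)" if "r2.G s u N a" for a
        using r2.G_act[OF that, of "[:0,1:]"] by (simp add: act2_Y)
      show "r2.G s u N (X' a)" if "r2.G s u N a" for a
      proof (rule r2.G_T[OF that])
        show "X' (x + y) = X' x + X' y" for x y by (rule X'_add)
        show "X' (act2 r x) = act2 r (X' x)" for r x by (rule X'_act2)
        fix i assume "i < N"
        have "act2 s (X' (u i)) = act2 [:0,1:] (u i)" by (simp add: act2s act2_Y XY XX')
        also have "\<dots> \<in> r2.Span u N" by (rule r2.Span_act, rule r2.Span_gen) fact
        finally show "act2 s (X' (u i)) \<in> r2.Span u N" .
      qed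
      show "r2.G s u N (Y' a)" if "r2.G s u N a" for a
      proof (rule r2.G_T[OF that])
        show "Y' (x + y) = Y' x + Y' y" for x y by (rule Y'_add)
        show "Y' (act2 r x) = act2 r (Y' x)" for r x by (rule Y'_act2)
        fix i assume "i < N"
        have "act2 s (Y' (u i)) = act2 [:[:0,1:]:] (u i)" by (simp add: act2s act2_const act1_X YY')
        also have "\<dots> \<in> r2.Span u N" by (rule r2.Span_act, rule r2.Span_gen) fact
        finally show "act2 s (Y' (u i)) \<in> r2.Span u N" .
      qed
    qed
    define z where "z i = f (u i)" for i
    have zu: "act2 y1 (z i) = u i" for i unfolding z_def by (rule f)
    obtain E rr where rr: "\<forall>i<N. act2 (s ^ E) (z i) = (\<Sum>j<N. act2 (rr i j) (u j))"
      using r2.G_uniform[of N s u N z] Gall by blast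
    define d where "d = det ((s ^ E) \<cdot>\<^sub>m 1\<^sub>m N - mat N N (\<lambda>(i,j). y1 * rr i j))"
    have dk: "act2 d (u i) = 0" if "i < N" for i
      unfolding d_def by (rule r2.DT2[OF zu]) (use rr that in auto)
    have sinj: "act2 s v = 0 \<Longrightarrow> v = 0" for v by (simp add: act2s) (metis X_inj Y_inj)
    have dz: "act2 d v = 0" for v by (rule r2.G_kill[OF Gall dk sinj])
    have "poly d 1 = poly (s ^ E) 1 ^ N"
      unfolding d_def by (rule det_hom_eval[OF poly_eval_hom]) (simp add: y1_def)
    also have "\<dots> = [:0, 1:] ^ (E * N)" by (simp add: s_def poly_power power_mult)
    also have "\<dots> \<noteq> 0" by simp
    finally have "d \<noteq> 0" by auto
    thus ?thesis using dz by blast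
  qed
qed

end


(* ---- Core4 ---- *)


context core
begin

interpretation vs: vector_space scale by (rule vs)

lemma step1b: "\<exists>P. P \<noteq> 0 \<and> (\<forall>v. act2 P v = 0) \<and> Polynomial.coeff P 0 \<noteq> 0"
proof -
  have main: "\<And>P. P \<noteq> 0 \<Longrightarrow> (\<forall>v. act2 P v = 0) \<Longrightarrow> Polynomial.degree P = n \<Longrightarrow>
      \<exists>P. P \<noteq> 0 \<and> (\<forall>v. act2 P v = 0) \<and> Polynomial.coeff P 0 \<noteq> 0" for n
  proof (induction n rule: less_induct)
    case (less n P)
    show ?case
    proof (cases "Polynomial.coeff P 0 = 0")
      case False thus ?thesis using less.prems by blast
    next
      case True
      obtain a P1 where P: "P = pCons a P1" by (rule pCons_cases)
      have a: "a = 0" using True P by simp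
      have P1: "P1 \<noteq> 0" using less.prems(1) P a by auto
      have "act2 P1 v = 0" for v
      proof -
        have "act2 P v = Y (act2 P1 v)" unfolding P a
          by (simp add: pext.pact_pCons[OF pext2] pext.Z0[OF pext2] ract.A_zero[OF ract1])
        thus ?thesis using less.prems(2) Y_inj by metis
      qed
      moreover have "Polynomial.degree P1 < n" using less.prems(3) P P1 by simp
      ultimately show ?thesis using less.IH P1 by blast
    qed
  qed
  obtain P where "P \<noteq> 0" "\<forall>v. act2 P v = 0" using step1 by blast
  thus ?thesis using main by blast
qed

lemma infinite_k: "infinite (UNIV :: 'k set)"
proof
  assume fin: "finite (UNIV :: 'k set)"
  define q :: "'k poly" where "q = (\<Prod>a\<in>UNIV. [:- a, 1:]) + 1"
  have dpA: "Polynomial.degree (\<Prod>a\<in>A. [:- a, 1:]) = card A" if "finite A" for A :: "'k set"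
    using that
  proof (induction A rule: finite_induct)
    case empty thus ?case by simp
  next
    case (insert x F)
    have ne: "(\<Prod>a\<in>F. [:- a, 1:]) \<noteq> (0::'k poly)" using insert.hyps(1) by (simp add: prod_zero_iff)
    have "Polynomial.degree (\<Prod>a\<in>insert x F. [:- a, 1:]) = Polynomial.degree ([:- x, 1:] * (\<Prod>a\<in>F. [:- a, 1:]))"
      by (simp only: prod.insert[OF insert.hyps])
    also have "\<dots> = Polynomial.degree [:- x, 1:] + Polynomial.degree (\<Prod>a\<in>F. [:- a, 1:])"
      by (rule degree_mult_eq) (simp_all add: ne)
    also have "\<dots> = Suc (card F)" using insert.IH by simp
    finally show ?case using insert.hyps by simp
  qed
  have dp: "Polynomial.degree (\<Prod>a\<in>(UNIV :: 'k set). [:- a, 1:]) = card (UNIV :: 'k set)" by (rule dpA[OF fin])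
  have "card (UNIV :: 'k set) > 0" using fin by (simp add: finite_UNIV_card_ge_0)
  hence "Polynomial.degree q > 0" unfolding q_def using dp
    by (metis add.commute degree_pCons_0 degree_add_eq_left one_pCons)
  then obtain x where "poly q x = 0" using algc by blast
  moreover have "poly (\<Prod>a\<in>UNIV. [:- a, 1:]) x = 0"
    using fin by (simp add: poly_prod)
  ultimately show False unfolding q_def by simp
qed

lemma step2: "\<exists>q. q \<noteq> 0 \<and> (\<forall>v. act1 q v = 0)"
proof (rule ccontr)
  assume nalg: "\<not> (\<exists>q. q \<noteq> 0 \<and> (\<forall>v. act1 q v = 0))"
  interpret r1: ract act1 by (rule ract1)
  have bij1: "(\<forall>v. act1 q v = 0 \<longrightarrow> v = 0) \<and> (\<forall>w. \<exists>v. act1 q v = w)" if "q \<noteq> 0" for q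
    using Schur[OF Cen_act1[of q]] nalg that by blast
  obtain P where P0: "P \<noteq> 0" and Pz: "\<And>v. act2 P v = 0" and c0: "Polynomial.coeff P 0 \<noteq> 0"
    using step1b by blast
  define D where "D = Polynomial.degree P"
  define c where "c j = Polynomial.coeff P j" for j
  have D0: "D > 0"
  proof (rule ccontr)
    assume "\<not> D > 0"
    hence "P = [:Polynomial.coeff P 0:]" unfolding D_def by (metis degree_0_id gr0I)
    hence "act1 (Polynomial.coeff P 0) v = 0" for v using Pz[of v] by (metis act2_const)
    thus False using nalg c0 by blast
  qed
  have cD: "c D \<noteq> 0" unfolding c_def D_def using P0 by simp
  have c0': "c 0 \<noteq> 0" unfolding c_def using c0 .
  have rel: "(\<Sum>j\<le>D. act1 (c j) ((Y ^^ j) v)) = 0" for v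
    using Pz[of v] unfolding pact_def[of act1 Y] c_def D_def .
  define uu where "uu l = (Y ^^ (l mod D)) (u (l div D))" for l
  define n2 where "n2 = N * D"
  have uu_ij: "uu (i * D + j) = (Y ^^ j) (u i)" if "j < D" for i j
    unfolding uu_def using that D0 by simp
  have sumuu: "(\<Sum>j<D. act1 (f j) (uu (i * D + j))) = (\<Sum>j<D. act1 (f j) ((Y ^^ j) (u i)))" for f i
    by (rule sum.cong) (simp_all add: uu_ij)
  have lt: "i * D + j < n2" if "i < N" "j < D" for i j
  proof -
    have "i * D + j < i * D + D" using that by simp
    also have "\<dots> = Suc i * D" by simp
    also have "\<dots> \<le> N * D" using that by (intro mult_right_mono) auto
    finally show ?thesis unfolding n2_def .
  qed
  have ldec: "l = (l div D) * D + l mod D" "l mod D < D" "l < n2 \<Longrightarrow> l div D < N" for l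
    using D0 by (auto simp: n2_def less_mult_imp_div_less)
  define S where "S = [:0, 1:] * c 0 * c D"
  have S_alt: "S = ([:0, 1:] * c D) * c 0" unfolding S_def by (simp add: ac_simps)
  have Sne: "S \<noteq> 0" unfolding S_def using cD c0' by simp
  have act1S: "act1 S v = X (act1 (c 0 * c D) v)" for v
    by (simp only: S_def mult.assoc act1_mult act1_X)
  have Sinj: "act1 S v = 0 \<Longrightarrow> v = 0" for v
  proof -
    assume "act1 S v = 0"
    hence "X (act1 (c 0) (act1 (c D) v)) = 0" by (simp only: S_def act1_mult act1_X)
    hence "act1 (c 0) (act1 (c D) v) = 0" by (rule X_inj)
    hence "act1 (c D) v = 0" using bij1[OF c0'] by blast
    thus "v = 0" using bij1[OF cD] by blast
  qed
  have Gall: "r1.G S uu n2 v" for v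
  proof (rule genH[of "r1.G S uu n2"])
    show "r1.G S uu n2 (u i)" if "i < N" for i
    proof -
      have "u i = uu (i * D + 0)" using uu_ij[of 0 i] D0 by simp
      thus ?thesis using r1.G_gen[OF lt[OF that D0]] by simp
    qed
    show "r1.G S uu n2 (a + b)" if "r1.G S uu n2 a" "r1.G S uu n2 b" for a b
      using that by (rule r1.G_add)
    show "r1.G S uu n2 0" by (rule r1.G_zero)
    show "r1.G S uu n2 (scale c a)" if "r1.G S uu n2 a" for c a
      using r1.G_act[OF that, of "[:c:]"] by (simp add: act1_const)
    show "r1.G S uu n2 (X a)" if "r1.G S uu n2 a" for a
      using r1.G_act[OF that, of "[:0,1:]"] by (simp add: act1_X)
    show "r1.G S uu n2 (X' a)" if "r1.G S uu n2 a" for a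
    proof (rule r1.G_T[OF that])
      show "X' (x + y) = X' x + X' y" for x y by (rule X'_add)
      show "X' (act1 r x) = act1 r (X' x)" for r x by (rule X'_act1)
      fix l assume "l < n2"
      have "act1 S (X' (uu l)) = act1 (c 0 * c D) (uu l)" by (simp add: act1S X'_act1[symmetric] XX' X'X)
      also have "\<dots> \<in> r1.Span uu n2" by (rule r1.Span_act, rule r1.Span_gen) fact
      finally show "act1 S (X' (uu l)) \<in> r1.Span uu n2" .
    qed
    show "r1.G S uu n2 (Y a)" if "r1.G S uu n2 a" for a
    proof (rule r1.G_T[OF that])
      show "Y (x + y) = Y x + Y y" for x y by (rule Y_add)
      show "Y (act1 r x) = act1 r (Y x)" for r x by (rule Y_act1)
      fix l assume l: "l < n2"
      define i where "i = l div D"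
      define j where "j = l mod D"
      have l_eq: "l = i * D + j" and jD: "j < D" and iN: "i < N"
        using ldec[of l] l unfolding i_def j_def by auto
      show "act1 S (Y (uu l)) \<in> r1.Span uu n2"
      proof (cases "Suc j < D")
        case True
        have "Y (uu l) = uu (i * D + Suc j)" unfolding l_eq uu_ij[OF jD] uu_ij[OF True] by simp
        thus ?thesis using r1.Span_act[OF r1.Span_gen[OF lt[OF iN True]]] by simp
      next
        case False
        hence jD': "Suc j = D" using jD by simp
        have "(\<Sum>j\<le>D. act1 (c j) ((Y ^^ j) (u i))) = (\<Sum>j<D. act1 (c j) ((Y ^^ j) (u i))) + act1 (c D) ((Y ^^ D) (u i))"
          by (simp add: lessThan_Suc_atMost[symmetric])
        hence e: "act1 (c D) ((Y ^^ D) (u i)) = - (\<Sum>j<D. act1 (c j) (uu (i * D + j)))"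
          unfolding sumuu using rel[of "u i"] by (simp add: eq_neg_iff_add_eq_0 add.commute)
        have "Y (uu l) = (Y ^^ Suc j) (u i)" unfolding l_eq uu_ij[OF jD] by simp
        hence "Y (uu l) = (Y ^^ D) (u i)" unfolding jD' .
        hence "act1 S (Y (uu l)) = act1 ([:0, 1:] * c 0) (act1 (c D) ((Y ^^ D) (u i)))"
          by (simp only: S_def act1_mult)
        also have "\<dots> = act1 ([:0, 1:] * c 0) (- (\<Sum>j<D. act1 (c j) (uu (i * D + j))))" using e by simp
        also have "\<dots> \<in> r1.Span uu n2"
          by (intro r1.Span_act r1.Span_uminus r1.Span_sum r1.Span_gen lt iN) simp
        finally show ?thesis .
      qed
    qed
    show "r1.G S uu n2 (Y' a)" if "r1.G S uu n2 a" for a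
    proof (rule r1.G_T[OF that])
      show "Y' (x + y) = Y' x + Y' y" for x y by (rule Y'_add)
      show "Y' (act1 r x) = act1 r (Y' x)" for r x by (rule Y'_act1)
      fix l assume l: "l < n2"
      define i where "i = l div D"
      define j where "j = l mod D"
      have l_eq: "l = i * D + j" and jD: "j < D" and iN: "i < N"
        using ldec[of l] l unfolding i_def j_def by auto
      show "act1 S (Y' (uu l)) \<in> r1.Span uu n2"
      proof (cases j)
        case (Suc j')
        have j'D: "j' < D" using jD Suc by simp
        have "Y' (uu l) = Y' ((Y ^^ j) (u i))" unfolding l_eq uu_ij[OF jD] ..
        also have "\<dots> = (Y ^^ j') (u i)" using Suc by (simp add: Y'Y)
        also have "\<dots> = uu (i * D + j')" using uu_ij[OF j'D] by simp
        finally have "Y' (uu l) = uu (i * D + j')" .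
        thus ?thesis using r1.Span_act[OF r1.Span_gen[OF lt[OF iN j'D]]] by simp
      next
        case 0
        have Y'sum: "Y' (\<Sum>j\<in>T. f j) = (\<Sum>j\<in>T. Y' (f j))" for T and f :: "nat \<Rightarrow> 'v"
          by (induction T rule: infinite_finite_induct) (auto simp: Y'_add Y'_zero)
        have Y'neg: "Y' (- x) = - Y' x" for x
          by (metis Y'_add Y'_zero add_eq_0_iff right_minus)
        have "(\<Sum>j\<le>D. act1 (c j) ((Y ^^ j) (u i))) = act1 (c 0) (u i) + (\<Sum>j<D. act1 (c (Suc j)) ((Y ^^ Suc j) (u i)))"
          by (subst sum.atMost_shift) simp
        hence e: "act1 (c 0) (u i) = - (\<Sum>j<D. act1 (c (Suc j)) ((Y ^^ Suc j) (u i)))"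
          using rel[of "u i"] by (simp add: eq_neg_iff_add_eq_0)
        have "act1 (c 0) (Y' (u i)) = Y' (act1 (c 0) (u i))" by (simp add: Y'_act1)
        also have "\<dots> = - (\<Sum>j<D. act1 (c (Suc j)) (uu (i * D + j)))"
          unfolding e Y'neg Y'sum sumuu by (simp add: Y'_act1 Y'Y)
        finally have e2: "act1 (c 0) (Y' (u i)) = - (\<Sum>j<D. act1 (c (Suc j)) (uu (i * D + j)))" .
        have "uu l = u i" unfolding l_eq 0 using uu_ij[of 0 i] D0 by simp
        hence "act1 S (Y' (uu l)) = act1 ([:0, 1:] * c D) (act1 (c 0) (Y' (u i)))"
          by (simp only: S_alt act1_mult)
        also have "\<dots> = act1 ([:0, 1:] * c D) (- (\<Sum>j<D. act1 (c (Suc j)) (uu (i * D + j))))"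
          using e2 by simp
        also have "\<dots> \<in> r1.Span uu n2"
          by (intro r1.Span_act r1.Span_uminus r1.Span_sum r1.Span_gen lt iN) simp
        finally show ?thesis .
      qed
    qed
  qed
  obtain lam where lam: "poly S lam \<noteq> 0"
  proof -
    have "finite {x. poly S x = 0}" using Sne by (rule poly_roots_finite)
    then obtain x where "x \<notin> {x. poly S x = 0}" using infinite_k by (metis ex_new_if_finite)
    thus ?thesis using that by blast
  qed
  define \<pi> where "\<pi> = [:- lam, 1:]"
  have "\<pi> \<noteq> 0" unfolding \<pi>_def by simp
  from bij1[OF this] obtain f where f: "\<And>w. act1 \<pi> (f w) = w" by metis
  define z where "z l = f (uu l)" for l
  have zu: "act1 \<pi> (z l) = uu l" for l unfolding z_def by (rule f)
  obtain E rr where rr: "\<forall>i<n2. act1 (S ^ E) (z i) = (\<Sum>j<n2. act1 (rr i j) (uu j))"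
    using r1.G_uniform[of n2 S uu n2 z] Gall by blast
  define d where "d = det ((S ^ E) \<cdot>\<^sub>m 1\<^sub>m n2 - mat n2 n2 (\<lambda>(i,j). \<pi> * rr i j))"
  have dk: "act1 d (uu i) = 0" if "i < n2" for i
    unfolding d_def by (rule r1.DT2[OF zu]) (use rr that in auto)
  have dz: "act1 d v = 0" for v by (rule r1.G_kill[OF Gall dk Sinj])
  have "poly d lam = poly (S ^ E) lam ^ n2"
    unfolding d_def by (rule det_hom_eval[OF poly_eval_hom]) (simp add: \<pi>_def)
  also have "\<dots> \<noteq> 0" using lam by (simp add: poly_power)
  finally have "d \<noteq> 0" by auto
  thus False using nalg dz by blast
qed

lemma scalar_of_alg:
  assumes "q \<noteq> 0" "\<forall>v. act1 q v = 0"
  shows "\<exists>lam. \<forall>v. X v = scale lam v"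
  using assms
proof (induction "Polynomial.degree q" arbitrary: q rule: less_induct)
  case less
  show ?case
  proof (cases "Polynomial.degree q = 0")
    case True
    then obtain a where q: "q = [:a:]" by (metis degree_0_id)
    with less.prems have a0: "a \<noteq> 0" by simp
    have sa: "scale a v = 0" for v using less.prems(2)[rule_format, of v] q by (simp add: act1_const)
    have v0: "v = 0" for v :: 'v
    proof -
      have "scale a v = 0" by (rule sa)
      thus "v = 0" using a0 by simp
    qed
    show ?thesis by (rule exI[of _ 0]) (simp add: v0[of "X _"])
  next
    case False
    then obtain lam where "poly q lam = 0" using algc by blast
    then obtain q1 where q: "q = [:- lam, 1:] * q1" by (metis poly_eq_0_iff_dvd dvdE)
    have q1: "q1 \<noteq> 0" using less.prems q by auto
    have "Polynomial.degree q = 1 + Polynomial.degree q1" unfolding q by (subst degree_mult_eq) (simp_all add: q1)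
    hence dq: "Polynomial.degree q1 < Polynomial.degree q" by simp
    have Cl: "act1 q v = act1 [:- lam, 1:] (act1 q1 v)" for v unfolding q by (rule act1_mult)
    have Xl: "act1 [:- lam, 1:] v = scale (- lam) v + X v" for v
      using pext.pact_pCons[OF pext1, of "- lam" "[:1:]" v] act1_const[of 1 v] by simp
    show ?thesis
    proof (cases "\<forall>v. act1 [:- lam, 1:] v = 0")
      case True
      have "X v = scale lam v" for v using True[rule_format, of v] unfolding Xl
        by (simp add: add_eq_0_iff)
      thus ?thesis by blast
    next
      case False
      with Schur[OF Cen_act1[of "[:- lam, 1:]"]] have inj: "\<forall>v. act1 [:- lam, 1:] v = 0 \<longrightarrow> v = 0" by blast
      have "\<forall>v. act1 q1 v = 0" using less.prems(2) inj Cl by metis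
      thus ?thesis using less.hyps[OF dq q1] by blast
    qed
  qed
qed

theorem X_scalar: "\<exists>lam. \<forall>v. X v = scale lam v"
  using step2 scalar_of_alg by blast

end

lemma core_swap:
  assumes "core scale X X' Y Y' Cen u N"
  shows "core scale Y Y' X X' Cen u N"
proof -
  interpret core scale X X' Y Y' Cen u N by fact
  interpret vs: vector_space scale by (rule vs)
  show ?thesis
  proof (unfold_locales)
    show "\<And>Pr v. (\<And>i. i < N \<Longrightarrow> Pr (u i)) \<Longrightarrow> (\<And>a b. Pr a \<Longrightarrow> Pr b \<Longrightarrow> Pr (a + b))
        \<Longrightarrow> (\<And>c a. Pr a \<Longrightarrow> Pr (scale c a)) \<Longrightarrow> Pr 0
        \<Longrightarrow> (\<And>a. Pr a \<Longrightarrow> Pr (Y a)) \<Longrightarrow> (\<And>a. Pr a \<Longrightarrow> Pr (Y' a))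
        \<Longrightarrow> (\<And>a. Pr a \<Longrightarrow> Pr (X a)) \<Longrightarrow> (\<And>a. Pr a \<Longrightarrow> Pr (X' a)) \<Longrightarrow> Pr v"
      by (rule genH)
  qed (simp_all add: vs.scale_right_distrib vs.scale_left_distrib X_add X_scale X'_add X'_scale Y_add Y_scale Y'_add Y'_scale XX' X'X YY' Y'Y
      XY X'Y XY' X'Y' Cen_id Cen_zero Cen_comp Cen_add Cen_scale Cen_X Cen_Y Schur algc)
qed

lemma core_both:
  assumes "core scale X X' Y Y' Cen u N"
  shows "(\<exists>lam. \<forall>v. X v = scale lam v) \<and> (\<exists>mu. \<forall>v. Y v = scale mu v)"
  using core.X_scalar[OF assms] core.X_scalar[OF core_swap[OF assms]] by blast


(* ---- Pad1 ---- *)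


locale padic =
  fixes p :: nat
  assumes pprime: "prime p" and podd: "odd p"
begin

abbreviation "P \<equiv> int p"

lemma P_gt1: "P > 1" using pprime prime_gt_1_nat by auto
lemma P_prime: "prime P" using pprime by simp
lemma Ppow_pos: "P ^ n > 0" using P_gt1 by simp

lemma mod_Ppow_range: "0 \<le> a mod P ^ n" "a mod P ^ n < P ^ n"
  using Ppow_pos[of n] by simp_all

definition one1 :: "nat \<Rightarrow> int" where "one1 = (\<lambda>n. 1 mod P ^ n)"

lemma qone_eq: "qone P = (0, one1)" unfolding qone_def one1_def by simp

lemma carrier_simps:
  assumes "x \<in> zp_carrier P"
  shows "0 \<le> x n" "x n < P ^ n" "x n = x (Suc n) mod P ^ n" "x n mod P ^ n = x n"
proof -
  show a: "0 \<le> x n" "x n < P ^ n" "x n = x (Suc n) mod P ^ n"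
    using assms unfolding zp_carrier_def by blast+
  thus "x n mod P ^ n = x n" by simp
qed

lemma carrier_0: "x \<in> zp_carrier P \<Longrightarrow> x 0 = 0"
  using carrier_simps[of x 0] by simp

lemma carrier_le: assumes "x \<in> zp_carrier P" "n \<le> m" shows "x n = x m mod P ^ n"
  using assms(2)
proof (induction m)
  case 0 thus ?case using carrier_simps[OF assms(1), of 0] by simp
next
  case (Suc m)
  show ?case
  proof (cases "n = Suc m")
    case True thus ?thesis using carrier_simps(4)[OF assms(1), of n] by simp
  next
    case False
    hence "n \<le> m" using Suc by simp
    hence "x n = x m mod P ^ n" by (rule Suc.IH)
    also have "x m = x (Suc m) mod P ^ m" using carrier_simps(3)[OF assms(1)] .
    also have "x (Suc m) mod P ^ m mod P ^ n = x (Suc m) mod P ^ n"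
      using \<open>n \<le> m\<close> by (intro mod_mod_cancel le_imp_power_dvd)
    finally show ?thesis .
  qed
qed

lemma carrier_1: "x \<in> zp_carrier P \<Longrightarrow> 1 \<le> n \<Longrightarrow> x 1 = x n mod P"
  using carrier_le[of x 1 n] by simp

lemma units_good: "x \<in> zp_units P \<Longrightarrow> \<not> P dvd x 1"
  unfolding zp_units_def using carrier_simps(1,2)[of x 1]
  by (auto simp: zdvd_not_zless dvd_imp_le_int)

lemma zp_mul_carrier:
  assumes "x \<in> zp_carrier P" "y \<in> zp_carrier P"
  shows "zp_mul P x y \<in> zp_carrier P"
  unfolding zp_carrier_def zp_mul_def
proof (intro CollectI allI conjI)
  fix n
  show "0 \<le> x n * y n mod P ^ n" "x n * y n mod P ^ n < P ^ n" by (simp_all add: mod_Ppow_range)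
  have "x (Suc n) * y (Suc n) mod P ^ Suc n mod P ^ n = x (Suc n) * y (Suc n) mod P ^ n"
    by (intro mod_mod_cancel le_imp_power_dvd) simp
  also have "\<dots> = (x (Suc n) mod P ^ n) * (y (Suc n) mod P ^ n) mod P ^ n"
    by (simp add: mod_mult_eq)
  also have "\<dots> = x n * y n mod P ^ n"
    using carrier_simps(3)[OF assms(1), of n, symmetric] carrier_simps(3)[OF assms(2), of n, symmetric] by simp
  finally show "x n * y n mod P ^ n = x (Suc n) * y (Suc n) mod P ^ Suc n mod P ^ n" by simp
qed

lemma zp_mul_units:
  assumes "x \<in> zp_units P" "y \<in> zp_units P"
  shows "zp_mul P x y \<in> zp_units P"
proof -
  have "\<not> P dvd x 1 * y 1" using units_good[OF assms(1)] units_good[OF assms(2)] P_prime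
    by (simp add: prime_dvd_mult_iff)
  hence "zp_mul P x y 1 \<noteq> 0" unfolding zp_mul_def by (simp add: dvd_eq_mod_eq_0)
  thus ?thesis using assms zp_mul_carrier unfolding zp_units_def by auto
qed

lemma zp_mul_comm: "zp_mul P x y = zp_mul P y x"
  unfolding zp_mul_def by (simp add: mult.commute)

lemma one1_carrier: "one1 \<in> zp_units P"
proof -
  have "one1 \<in> zp_carrier P" unfolding zp_carrier_def one1_def
  proof (intro CollectI allI conjI)
    fix n
    show "0 \<le> 1 mod P ^ n" "1 mod P ^ n < P ^ n" by (simp_all add: mod_Ppow_range)
    show "1 mod P ^ n = 1 mod P ^ Suc n mod P ^ n"
      by (rule mod_mod_cancel[symmetric]) (rule le_imp_power_dvd, simp)
  qed
  moreover have "one1 1 \<noteq> 0" unfolding one1_def using P_gt1 by simp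
  ultimately show ?thesis unfolding zp_units_def by simp
qed

lemma one1_mul: "x \<in> zp_carrier P \<Longrightarrow> zp_mul P one1 x = x"
  unfolding zp_mul_def one1_def
proof
  fix n assume x: "x \<in> zp_carrier P"
  have "1 mod P ^ n * x n mod P ^ n = 1 * x n mod P ^ n" by (simp add: mod_mult_left_eq)
  also have "\<dots> = x n" using carrier_simps(4)[OF x] by simp
  finally show "1 mod P ^ n * x n mod P ^ n = x n" .
qed

lemma mul_one1: "x \<in> zp_carrier P \<Longrightarrow> zp_mul P x one1 = x"
  by (subst zp_mul_comm) (rule one1_mul)

lemma units_carrier: "x \<in> zp_units P \<Longrightarrow> x \<in> zp_carrier P"
  unfolding zp_units_def by simp

subsection \<open>Inverses\<close>

lemma units_not_dvd:
  assumes "x \<in> zp_units P" "1 \<le> j" shows "\<not> P dvd x j"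
proof
  assume "P dvd x j"
  hence "x j mod P = 0" by simp
  hence "x 1 = 0" using carrier_1[OF units_carrier[OF assms(1)] assms(2)] by simp
  thus False using assms(1) unfolding zp_units_def by simp
qed

lemma units_coprime:
  assumes "x \<in> zp_units P" shows "coprime (x j) (P ^ j)"
proof (cases "j = 0")
  case True thus ?thesis by simp
next
  case False
  hence "\<not> P dvd x j" using units_not_dvd[OF assms] by simp
  hence "coprime (x j) P" using P_prime by (simp add: prime_imp_coprime coprime_commute)
  thus ?thesis by simp
qed

lemma zinv_ex1:
  assumes "x \<in> zp_units P"
  shows "\<exists>!y. 0 \<le> y \<and> y < P ^ j \<and> (x j * y) mod P ^ j = 1 mod P ^ j"
proof -
  obtain y where y: "[x j * y = 1] (mod P ^ j)"
    using cong_solve_coprime_int[OF units_coprime[OF assms]] by blast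
  define y' where "y' = y mod P ^ j"
  have ex: "0 \<le> y' \<and> y' < P ^ j \<and> (x j * y') mod P ^ j = 1 mod P ^ j"
    unfolding y'_def using y mod_Ppow_range
    by (simp add: cong_def mod_mult_right_eq)
  show ?thesis
  proof (rule ex1I[of _ y'])
    show "0 \<le> y' \<and> y' < P ^ j \<and> (x j * y') mod P ^ j = 1 mod P ^ j" by (rule ex)
    fix z assume z: "0 \<le> z \<and> z < P ^ j \<and> (x j * z) mod P ^ j = 1 mod P ^ j"
    have "[x j * z = x j * y'] (mod P ^ j)" using z ex by (simp add: cong_def)
    hence "[z = y'] (mod P ^ j)"
      using units_coprime[OF assms] by (metis cong_mult_lcancel)
    thus "z = y'" using z ex by (simp add: cong_def)
  qed
qed

lemma zinv_spec:
  assumes "x \<in> zp_units P"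
  shows "0 \<le> zp_inv P x j" "zp_inv P x j < P ^ j" "(x j * zp_inv P x j) mod P ^ j = 1 mod P ^ j"
  using theI'[OF zinv_ex1[OF assms, of j]] unfolding zp_inv_def by auto

lemma zinv_unique:
  assumes "x \<in> zp_units P" "0 \<le> y" "y < P ^ j" "(x j * y) mod P ^ j = 1 mod P ^ j"
  shows "zp_inv P x j = y"
  using zinv_ex1[OF assms(1), of j] zinv_spec[OF assms(1), of j] assms(2-4) by blast

lemma zinv_units:
  assumes x: "x \<in> zp_units P"
  shows "zp_inv P x \<in> zp_units P"
proof -
  have "zp_inv P x \<in> zp_carrier P" unfolding zp_carrier_def
  proof (intro CollectI allI conjI)
    fix j
    show "0 \<le> zp_inv P x j" "zp_inv P x j < P ^ j" by (rule zinv_spec[OF x])+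
    show "zp_inv P x j = zp_inv P x (Suc j) mod P ^ j"
    proof (rule zinv_unique[OF x])
      show "0 \<le> zp_inv P x (Suc j) mod P ^ j" "zp_inv P x (Suc j) mod P ^ j < P ^ j"
        by (simp_all add: mod_Ppow_range)
      have xc: "x \<in> zp_carrier P" using x by (rule units_carrier)
      have "x j * (zp_inv P x (Suc j) mod P ^ j) mod P ^ j = x (Suc j) * zp_inv P x (Suc j) mod P ^ j"
        using carrier_simps(3)[OF xc, of j] by (simp add: mod_mult_eq)
      also have "\<dots> = x (Suc j) * zp_inv P x (Suc j) mod P ^ Suc j mod P ^ j"
        by (intro mod_mod_cancel[symmetric] le_imp_power_dvd) simp
      also have "\<dots> = 1 mod P ^ Suc j mod P ^ j" using zinv_spec(3)[OF x, of "Suc j"] by simp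
      also have "\<dots> = 1 mod P ^ j" by (intro mod_mod_cancel le_imp_power_dvd) simp
      finally show "x j * (zp_inv P x (Suc j) mod P ^ j) mod P ^ j = 1 mod P ^ j" .
    qed
  qed
  moreover have "zp_inv P x 1 \<noteq> 0"
  proof
    assume "zp_inv P x 1 = 0"
    hence "(1::int) mod P = 0" using zinv_spec(3)[OF x, of 1] by simp
    thus False using P_gt1 by simp
  qed
  ultimately show ?thesis unfolding zp_units_def by simp
qed

subsection \<open>The multiplicative group\<close>

lemma qmul_carrier: "x \<in> qpx_carrier P \<Longrightarrow> y \<in> qpx_carrier P \<Longrightarrow> qmul P x y \<in> qpx_carrier P"
  unfolding qpx_carrier_def qmul_def by (auto intro: zp_mul_units)

lemma qinv_carrier: "x \<in> qpx_carrier P \<Longrightarrow> qinv P x \<in> qpx_carrier P"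
  unfolding qpx_carrier_def qinv_def by (auto intro: zinv_units)

lemma qone_carrier: "qone P \<in> qpx_carrier P"
  unfolding qone_eq qpx_carrier_def using one1_carrier by simp

lemma qpx_mem: "(m, u) \<in> qpx_carrier P \<longleftrightarrow> u \<in> zp_units P"
  unfolding qpx_carrier_def by simp

lemma qminus_one_carrier: "qminus_one P \<in> qpx_carrier P"
proof -
  have c: "(\<lambda>n. P ^ n - 1) \<in> zp_carrier P" unfolding zp_carrier_def
  proof (intro CollectI allI conjI)
    fix n
    have pos: "P ^ n > 0" by (rule Ppow_pos)
    show "0 \<le> P ^ n - 1" using pos by linarith
    show "P ^ n - 1 < P ^ n" by linarith
    have "P ^ Suc n - 1 = (- 1) + P * P ^ n" by simp
    hence "(P ^ Suc n - 1) mod P ^ n = (- 1) mod P ^ n" by (simp only: mod_mult_self1)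
    also have "(- 1) mod P ^ n = P ^ n - 1" using pos by (rule zmod_minus1)
    finally show "P ^ n - 1 = (P ^ Suc n - 1) mod P ^ n" by simp
  qed
  have "P ^ 1 - 1 \<noteq> 0" using P_gt1 by simp
  thus ?thesis using c unfolding qminus_one_def qpx_carrier_def zp_units_def by simp
qed

lemma fst_qmul[simp]: "fst (qmul P x y) = fst x + fst y" unfolding qmul_def by simp
lemma fst_qinv[simp]: "fst (qinv P x) = - fst x" unfolding qinv_def by simp
lemma L_qmul: "snd (qmul P x y) 1 = (snd x 1 * snd y 1) mod P" unfolding qmul_def zp_mul_def by simp

lemma qmul_qone: "x \<in> qpx_carrier P \<Longrightarrow> qmul P (qone P) x = x"
  unfolding qone_eq qmul_def qpx_carrier_def by (auto intro!: one1_mul units_carrier)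

lemma qmul_qone_right: "x \<in> qpx_carrier P \<Longrightarrow> qmul P x (qone P) = x"
  unfolding qone_eq qmul_def qpx_carrier_def by (auto intro!: mul_one1 units_carrier)

lemma carrier_snd: "x \<in> qpx_carrier P \<Longrightarrow> snd x \<in> zp_units P"
  unfolding qpx_carrier_def by (cases x) simp

lemma L_range: assumes "x \<in> qpx_carrier P" shows "0 \<le> snd x 1 \<and> snd x 1 < P"
proof -
  have "snd x \<in> zp_carrier P" using carrier_snd[OF assms] by (rule units_carrier)
  thus ?thesis using carrier_simps(1,2)[of "snd x" 1] by simp
qed

lemma L_good: "x \<in> qpx_carrier P \<Longrightarrow> \<not> P dvd snd x 1"
  using carrier_snd units_good by blast

lemma L_qinv: assumes "x \<in> qpx_carrier P" shows "(snd x 1 * snd (qinv P x) 1) mod P = 1"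
proof -
  have "(snd x 1 * zp_inv P (snd x) 1) mod P ^ 1 = 1 mod P ^ 1"
    using zinv_spec(3)[OF carrier_snd[OF assms], of 1] .
  thus ?thesis using P_gt1 by (simp add: qinv_def)
qed

end


(* ---- Pad2 ---- *)


context padic
begin

definition sq :: "qpx \<Rightarrow> bool" where
  "sq x \<longleftrightarrow> (\<exists>t. \<not> P dvd t \<and> [snd x 1 = t ^ 2] (mod P))"

lemma sq_L1: "snd x 1 = 1 \<Longrightarrow> sq x"
  unfolding sq_def by (rule exI[of _ 1]) (use P_gt1 in \<open>auto simp: zdvd1_eq\<close>)

lemma sq_cong: "[snd x 1 = snd y 1] (mod P) \<Longrightarrow> sq y \<Longrightarrow> sq x"
  unfolding sq_def using cong_trans by blast

lemma sq_mul: assumes "sq x" "sq y" shows "sq (qmul P x y)"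
proof -
  obtain t s where t: "\<not> P dvd t" "[snd x 1 = t ^ 2] (mod P)"
    and s: "\<not> P dvd s" "[snd y 1 = s ^ 2] (mod P)"
    using assms unfolding sq_def by blast
  have "\<not> P dvd t * s" using t(1) s(1) P_prime by (simp add: prime_dvd_mult_iff)
  moreover have "[snd (qmul P x y) 1 = (t * s) ^ 2] (mod P)"
    unfolding L_qmul using cong_mult[OF t(2) s(2)]
    by (simp add: cong_def power_mult_distrib)
  ultimately show ?thesis unfolding sq_def by blast
qed

lemma sq_inv: assumes x: "x \<in> qpx_carrier P" and "sq x" shows "sq (qinv P x)"
proof -
  obtain t where t: "\<not> P dvd t" "[snd x 1 = t ^ 2] (mod P)" using assms unfolding sq_def by blast
  have "coprime t P" using prime_imp_coprime[OF P_prime t(1)] by (simp add: coprime_commute)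
  then obtain t' where t': "[t * t' = 1] (mod P)" using cong_solve_coprime_int by blast
  define i where "i = snd (qinv P x) 1"
  have xi: "[snd x 1 * i = 1] (mod P)" using L_qinv[OF x] P_gt1 unfolding i_def by (simp add: cong_def)
  have "[i = i * (t * t') ^ 2] (mod P)"
    using cong_mult[OF cong_refl[of i] cong_pow[OF t', of 2]] by (simp add: cong_sym)
  also have "i * (t * t') ^ 2 = (snd x 1 * i) * t' ^ 2 + (t ^ 2 - snd x 1) * i * t' ^ 2"
    by (simp add: algebra_simps power_mult_distrib)
  also have "[\<dots> = 1 * t' ^ 2 + 0 * i * t' ^ 2] (mod P)"
    by (intro cong_add cong_mult cong_refl xi) (use t(2) in \<open>simp add: cong_iff_dvd_diff cong_sym_eq dvd_diff_commute\<close>)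
  finally have c: "[i = t' ^ 2] (mod P)" by simp
  have "\<not> P dvd t'"
  proof
    assume "P dvd t'"
    hence "[t * t' = 0] (mod P)" by (simp add: cong_def)
    with t' have "[1 = 0] (mod P)" by (metis cong_sym cong_trans)
    thus False using P_gt1 by (simp add: cong_def)
  qed
  thus ?thesis unfolding sq_def i_def[symmetric] using c by blast
qed

definition F :: "qpx \<Rightarrow> nat \<Rightarrow> qpx" where "F x n = ((qmul P x) ^^ n) (qone P)"

lemma F_Suc: "F x (Suc n) = qmul P x (F x n)" unfolding F_def by simp
lemma F_0: "F x 0 = qone P" unfolding F_def by simp

lemma F_carrier: "x \<in> qpx_carrier P \<Longrightarrow> F x n \<in> qpx_carrier P"
  by (induction n) (simp_all add: F_0 F_Suc qone_carrier qmul_carrier)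

lemma F_fst: "fst (F x n) = int n * fst x"
  by (induction n) (simp_all add: F_0 F_Suc qone_eq algebra_simps)

lemma F_L: "snd (F x n) 1 = snd x 1 ^ n mod P"
proof (induction n)
  case 0 thus ?case using P_gt1 by (simp add: F_0 qone_eq one1_def)
next
  case (Suc n)
  have "snd (F x (Suc n)) 1 = (snd x 1 * snd (F x n) 1) mod P" by (simp only: F_Suc L_qmul)
  thus ?case using Suc.IH by (simp add: mod_mult_right_eq)
qed

lemma qpow_eq: "qpow P x k = (if 0 \<le> k then F x (nat k) else qinv P (F x (nat (- k))))"
  unfolding qpow_def F_def by simp

lemma qpow_carrier: "x \<in> qpx_carrier P \<Longrightarrow> qpow P x k \<in> qpx_carrier P"
  by (simp add: qpow_eq F_carrier qinv_carrier)

lemma qpow_fst: "fst (qpow P x k) = k * fst x"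
  by (simp add: qpow_eq F_fst)

lemma sq_qone: "sq (qone P)"
  by (rule sq_L1) (use P_gt1 in \<open>simp add: qone_eq one1_def\<close>)

lemma sq_F: "sq x \<Longrightarrow> sq (F x n)"
  by (induction n) (simp_all add: F_0 F_Suc sq_mul sq_qone)

lemma sq_qpow: "x \<in> qpx_carrier P \<Longrightarrow> sq x \<Longrightarrow> sq (qpow P x k)"
  by (simp add: qpow_eq sq_F sq_inv F_carrier)

lemma sq_F_even: assumes x: "x \<in> qpx_carrier P" and "even n" shows "sq (F x n)"
proof -
  obtain m where n: "n = 2 * m" using assms(2) by blast
  have "\<not> P dvd snd x 1 ^ m" using L_good[OF x] prime_dvd_power[OF P_prime] by blast
  moreover have "[snd (F x n) 1 = (snd x 1 ^ m) ^ 2] (mod P)"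
    unfolding F_L n by (simp add: cong_def power_mult[symmetric] mult.commute)
  ultimately show ?thesis unfolding sq_def by blast
qed

lemma sq_qpow_even: assumes x: "x \<in> qpx_carrier P" and "even k" shows "sq (qpow P x k)"
proof (cases "0 \<le> k")
  case True
  have "even (nat k)" using assms(2) True by (simp add: even_nat_iff)
  thus ?thesis using True by (simp add: qpow_eq sq_F_even[OF x])
next
  case False
  have "even (nat (- k))" using assms(2) False by (simp add: even_nat_iff)
  thus ?thesis using False by (simp add: qpow_eq sq_F_even[OF x] sq_inv F_carrier[OF x])
qed

lemma fermat_int: assumes "\<not> P dvd t" shows "[t ^ (p - 1) = 1] (mod P)"
proof -
  define a where "a = nat (t mod P)"
  have ta: "int a = t mod P" unfolding a_def using P_gt1 by simp
  have "\<not> p dvd a"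
  proof
    assume "p dvd a"
    hence "P dvd t mod P" using ta by (metis int_dvd_int_iff)
    thus False using assms by (simp add: dvd_mod_iff)
  qed
  hence "[a ^ (p - 1) = 1] (mod p)" using fermat_theorem[OF pprime] by blast
  hence "[int a ^ (p - 1) = 1] (mod P)" by (metis cong_int_iff of_nat_1 of_nat_power)
  moreover have "[t ^ (p - 1) = int a ^ (p - 1)] (mod P)"
    unfolding ta by (intro cong_pow) (simp add: cong_def)
  ultimately show ?thesis by (metis cong_trans)
qed

lemma hilbert_one:
  assumes a: "a \<in> qpx_carrier P" and b: "b \<in> qpx_carrier P"
    and ev: "even (fst a) \<or> even (fst b)"
    and c2: "sq b \<or> even (fst a)" and c3: "sq a \<or> even (fst b)"
  shows "hilbert P a b = 1"
proof -
  define x where "x = qmul P (qpow P (qminus_one P) (pval a * pval b))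
                     (qmul P (qpow P b (pval a)) (qinv P (qpow P a (pval b))))"
  have s1: "sq (qpow P (qminus_one P) (pval a * pval b))"
    using ev by (intro sq_qpow_even qminus_one_carrier) (auto simp: pval_def)
  have s2: "sq (qpow P b (pval a))"
    using c2 by (auto simp: pval_def intro: sq_qpow sq_qpow_even b)
  have s3: "sq (qinv P (qpow P a (pval b)))"
    using c3 by (auto simp: pval_def intro!: sq_inv qpow_carrier a intro: sq_qpow sq_qpow_even a)
  have "sq x" unfolding x_def by (intro sq_mul s1 s2 s3)
  then obtain t where t: "\<not> P dvd t" "[omega x = t ^ 2] (mod P)" unfolding sq_def omega_def by blast
  have e: "2 * nat ((P - 1) div 2) = p - 1" using podd pprime prime_gt_1_nat
    by (auto elim!: oddE simp: nat_mult_distrib)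
  have "[omega x ^ nat ((P - 1) div 2) = (t ^ 2) ^ nat ((P - 1) div 2)] (mod P)"
    by (rule cong_pow[OF t(2)])
  also have "(t ^ 2) ^ nat ((P - 1) div 2) = t ^ (p - 1)" by (simp add: power_mult[symmetric] e)
  also have "[\<dots> = 1] (mod P)" by (rule fermat_int[OF t(1)])
  finally have "omega x ^ nat ((P - 1) div 2) mod P = 1" using P_gt1 by (simp add: cong_def)
  thus ?thesis unfolding hilbert_def x_def Let_def by simp
qed

end


(* ---- Pad3 ---- *)


context padic
begin

definition pe :: "int \<Rightarrow> qpx" where "pe e = (e, one1)"

lemma pe_carrier: "pe e \<in> qpx_carrier P"
  unfolding pe_def qpx_carrier_def using one1_carrier by simp

lemma qone_pe: "qone P = pe 0" unfolding pe_def qone_eq ..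

lemma sq_pe: "sq (pe e)"
  by (rule sq_L1) (use P_gt1 in \<open>simp add: pe_def one1_def\<close>)

lemma fst_pe[simp]: "fst (pe e) = e" unfolding pe_def by simp

lemma zp_mul_assoc: "zp_mul P (zp_mul P x y) z = zp_mul P x (zp_mul P y z)"
  unfolding zp_mul_def by (simp add: mod_mult_left_eq mod_mult_right_eq mult.assoc)

lemma qmul_assoc: "qmul P (qmul P x y) z = qmul P x (qmul P y z)"
  unfolding qmul_def by (simp add: zp_mul_assoc add.assoc)

lemma qmul_comm: "qmul P x y = qmul P y x"
  unfolding qmul_def by (simp add: zp_mul_comm add.commute)

lemma qmul_pe_left: "a \<in> qpx_carrier P \<Longrightarrow> qmul P (pe e) a = (fst a + e, snd a)"
  unfolding pe_def qmul_def using one1_mul carrier_snd units_carrier by simp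

lemma qmul_pe_right: "a \<in> qpx_carrier P \<Longrightarrow> qmul P a (pe e) = (fst a + e, snd a)"
  using qmul_pe_left qmul_comm by metis

lemma qmul_pe_pe: "qmul P (pe a) (pe b) = pe (a + b)"
  using qmul_pe_left[OF pe_carrier, of a b] by (simp add: pe_def add.commute)

lemma Lcancel:
  assumes y: "y \<in> qpx_carrier P"
  shows "[snd (qmul P (qmul P w y) (qinv P y)) 1 = snd w 1] (mod P)"
proof -
  define a b c where "a = snd w 1" "b = snd y 1" "c = snd (qinv P y) 1"
  have bc: "(b * c) mod P = 1" unfolding a_b_c_def by (rule L_qinv[OF y])
  have "snd (qmul P (qmul P w y) (qinv P y)) 1 = ((a * b) mod P * c) mod P"
    unfolding a_b_c_def L_qmul ..
  also have "\<dots> = (a * (b * c)) mod P" by (simp add: mod_mult_left_eq mult.assoc)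
  also have "\<dots> = (a * ((b * c) mod P)) mod P" by (simp add: mod_mult_right_eq)
  also have "\<dots> = a mod P" using bc by simp
  finally show ?thesis unfolding a_b_c_def cong_def by simp
qed

lemma sigma_eq:
  "tt_sigma P (a1, d1) (a2, d2) = hilbert P (qmul P (qmul P d1 d2) (qinv P d1))
      (qmul P (qmul P (qmul P a1 d1) (qmul P d1 d2)) (qinv P d2))"
  by (simp add: tt_sigma_def Let_def)

lemma sigma_right:
  assumes c: "a1 \<in> qpx_carrier P" "d1 \<in> qpx_carrier P" "a2 \<in> qpx_carrier P" "d2 \<in> qpx_carrier P"
    and s: "sq d2" and e: "even (fst d2)"
  shows "tt_sigma P (a1, d1) (a2, d2) = 1"
proof -
  define A where "A = qmul P (qmul P d1 d2) (qinv P d1)"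
  define B where "B = qmul P (qmul P (qmul P a1 d1) (qmul P d1 d2)) (qinv P d2)"
  have Ac: "A \<in> qpx_carrier P" unfolding A_def using c by (intro qmul_carrier qinv_carrier)
  have Bc: "B \<in> qpx_carrier P" unfolding B_def using c by (intro qmul_carrier qinv_carrier)
  have "A = qmul P (qmul P d2 d1) (qinv P d1)" unfolding A_def by (simp add: qmul_comm)
  hence sA: "sq A" using sq_cong[OF Lcancel[OF c(2), of d2] s] by simp
  have eA: "even (fst A)" unfolding A_def using e by simp
  have "hilbert P A B = 1" by (rule hilbert_one[OF Ac Bc]) (use eA sA in auto)
  thus ?thesis unfolding sigma_eq A_def B_def .
qed

lemma sigma_left:
  assumes e: "even e1" "even e2" and c: "a2 \<in> qpx_carrier P" "d2 \<in> qpx_carrier P"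
  shows "tt_sigma P (pe e1, pe e2) (a2, d2) = 1"
proof -
  define A where "A = qmul P (qmul P (pe e2) d2) (qinv P (pe e2))"
  define B where "B = qmul P (qmul P (qmul P (pe e1) (pe e2)) (qmul P (pe e2) d2)) (qinv P d2)"
  have Ac: "A \<in> qpx_carrier P" unfolding A_def using c by (intro qmul_carrier qinv_carrier pe_carrier)
  have Bc: "B \<in> qpx_carrier P" unfolding B_def using c by (intro qmul_carrier qinv_carrier pe_carrier)
  have "B = qmul P (qmul P (pe (e1 + e2 + e2)) d2) (qinv P d2)"
    unfolding B_def by (simp add: qmul_assoc[symmetric] qmul_pe_pe)
  hence sB: "sq B" using sq_cong[OF Lcancel[OF c(2)] sq_pe] by simp
  have eB: "even (fst B)" unfolding B_def using e by simp
  have "hilbert P A B = 1" by (rule hilbert_one[OF Ac Bc]) (use eB sB in auto)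
  thus ?thesis unfolding sigma_eq A_def B_def .
qed

subsection \<open>The metaplectic torus\<close>

lemma tt_mem: "((a, d), z) \<in> tt_carrier P \<longleftrightarrow> a \<in> qpx_carrier P \<and> d \<in> qpx_carrier P \<and> z \<in> {1, -1}"
  unfolding tt_carrier_def by simp

lemma hilbert_pm: "hilbert P a b \<in> {1, -1}"
  unfolding hilbert_def Let_def by simp

lemma tt_mul_eq:
  "tt_mul P ((a1, d1), z1) ((a2, d2), z2) = ((qmul P a1 a2, qmul P d1 d2), z1 * z2 * tt_sigma P (a1, d1) (a2, d2))"
  unfolding tt_mul_def by simp

lemma tt_mul_carrier:
  assumes "g \<in> tt_carrier P" "h \<in> tt_carrier P" shows "tt_mul P g h \<in> tt_carrier P"
proof -
  obtain a1 d1 z1 a2 d2 z2 where g: "g = ((a1, d1), z1)" and h: "h = ((a2, d2), z2)"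
    by (metis prod.collapse)
  have s: "tt_sigma P (a1, d1) (a2, d2) \<in> {1, -1}"
    unfolding sigma_eq by (rule hilbert_pm)
  show ?thesis using assms s unfolding g h tt_mul_eq tt_mem
    by (auto intro: qmul_carrier)
qed

definition QQ :: "int \<Rightarrow> int \<Rightarrow> ttilde" where "QQ e1 e2 = ((pe e1, pe e2), 1)"

lemma QQ_carrier: "QQ e1 e2 \<in> tt_carrier P"
  unfolding QQ_def tt_mem using pe_carrier by simp

lemma tt_one_QQ: "tt_one P = QQ 0 0"
  unfolding tt_one_def QQ_def qone_pe ..

lemma tt_one_carrier: "tt_one P \<in> tt_carrier P"
  unfolding tt_one_QQ by (rule QQ_carrier)

lemma mul_QQ_left:
  assumes e: "even e1" "even e2" and g: "((a, d), z) \<in> tt_carrier P"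
  shows "tt_mul P (QQ e1 e2) ((a, d), z) = (((fst a + e1, snd a), (fst d + e2, snd d)), z)"
proof -
  have c: "a \<in> qpx_carrier P" "d \<in> qpx_carrier P" using g unfolding tt_mem by auto
  show ?thesis unfolding QQ_def tt_mul_eq sigma_left[OF e c] qmul_pe_left[OF c(1)] qmul_pe_left[OF c(2)]
    by simp
qed

lemma mul_QQ_right:
  assumes e: "even e1" "even e2" and g: "((a, d), z) \<in> tt_carrier P"
  shows "tt_mul P ((a, d), z) (QQ e1 e2) = (((fst a + e1, snd a), (fst d + e2, snd d)), z)"
proof -
  have c: "a \<in> qpx_carrier P" "d \<in> qpx_carrier P" using g unfolding tt_mem by auto
  have s: "tt_sigma P (a, d) (pe e1, pe e2) = 1"
    by (rule sigma_right[OF c pe_carrier pe_carrier sq_pe]) (simp add: e)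
  show ?thesis unfolding QQ_def tt_mul_eq s qmul_pe_right[OF c(1)] qmul_pe_right[OF c(2)]
    by simp
qed

lemma QQ_comm: "even e1 \<Longrightarrow> even e2 \<Longrightarrow> g \<in> tt_carrier P \<Longrightarrow> tt_mul P (QQ e1 e2) g = tt_mul P g (QQ e1 e2)"
  by (cases g) (auto simp: mul_QQ_left mul_QQ_right)

lemma QQ_inv: "even e1 \<Longrightarrow> even e2 \<Longrightarrow> tt_mul P (QQ e1 e2) (QQ (- e1) (- e2)) = tt_one P"
  using mul_QQ_left[of e1 e2 "pe (- e1)" "pe (- e2)" 1] QQ_carrier[of "- e1" "- e2"]
  by (simp add: QQ_def tt_one_QQ pe_def)

lemma QQ_shift:
  assumes e: "even e1" "even e2" and g: "((a, d), z) \<in> tt_carrier P"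
  shows "(((fst a + e1, snd a), (fst d + e2, snd d)), z) \<in> tt_carrier P"
  using tt_mul_carrier[OF QQ_carrier[of e1 e2] g] mul_QQ_left[OF e g] by simp

subsection \<open>Decomposition modulo K_n\<close>

definition trunc :: "int \<Rightarrow> nat \<Rightarrow> int" where "trunc c = (\<lambda>j. c mod P ^ j)"

lemma trunc_units:
  assumes u: "u \<in> zp_units P" and n: "1 \<le> n"
  shows "trunc (u n) \<in> zp_units P"
proof -
  have "trunc (u n) \<in> zp_carrier P" unfolding zp_carrier_def trunc_def
  proof (intro CollectI allI conjI)
    fix j
    show "0 \<le> u n mod P ^ j" "u n mod P ^ j < P ^ j" by (simp_all add: mod_Ppow_range)
    show "u n mod P ^ j = u n mod P ^ Suc j mod P ^ j"
      by (rule mod_mod_cancel[symmetric]) (rule le_imp_power_dvd, simp)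
  qed
  moreover have "trunc (u n) 1 \<noteq> 0"
    using carrier_1[OF units_carrier[OF u] n] u unfolding trunc_def zp_units_def by simp
  ultimately show ?thesis unfolding zp_units_def by simp
qed

lemma mul_inv_cancel:
  assumes x: "x \<in> zp_units P" and u: "u \<in> zp_carrier P"
  shows "zp_mul P x (zp_mul P (zp_inv P x) u) = u"
proof
  fix j
  have "zp_mul P x (zp_mul P (zp_inv P x) u) j = (x j * zp_inv P x j * u j) mod P ^ j"
    unfolding zp_mul_def by (simp add: mod_mult_right_eq mult.assoc)
  also have "\<dots> = ((x j * zp_inv P x j) mod P ^ j * u j) mod P ^ j" by (simp add: mod_mult_left_eq)
  also have "\<dots> = (1 mod P ^ j * u j) mod P ^ j" using zinv_spec(3)[OF x, of j] by simp
  also have "\<dots> = u j" using carrier_simps(4)[OF u, of j] by (simp add: mod_mult_left_eq)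
  finally show "zp_mul P x (zp_mul P (zp_inv P x) u) j = u j" .
qed

definition kfac :: "zp \<Rightarrow> nat \<Rightarrow> zp" where
  "kfac u n = zp_mul P (zp_inv P (trunc (u n))) u"

lemma kfac_units: "u \<in> zp_units P \<Longrightarrow> 1 \<le> n \<Longrightarrow> kfac u n \<in> zp_units P"
  unfolding kfac_def by (intro zp_mul_units zinv_units trunc_units)

lemma kfac_n: assumes u: "u \<in> zp_units P" and n: "1 \<le> n" shows "kfac u n n = 1 mod P ^ n"
proof -
  have t: "trunc (u n) n = u n" unfolding trunc_def using carrier_simps(4)[OF units_carrier[OF u]] .
  have "kfac u n n = (zp_inv P (trunc (u n)) n * u n) mod P ^ n" unfolding kfac_def zp_mul_def ..
  also have "\<dots> = (trunc (u n) n * zp_inv P (trunc (u n)) n) mod P ^ n" using t by (simp add: mult.commute)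
  also have "\<dots> = 1 mod P ^ n" by (rule zinv_spec(3)[OF trunc_units[OF u n]])
  finally show ?thesis .
qed

lemma kfac_1: assumes u: "u \<in> zp_units P" and n: "1 \<le> n" shows "kfac u n 1 = 1"
proof -
  have "kfac u n 1 = kfac u n n mod P" by (rule carrier_1[OF units_carrier[OF kfac_units[OF u n]] n])
  also have "\<dots> = 1 mod P" unfolding kfac_n[OF u n] using n by (intro mod_mod_cancel) (simp add: dvd_power)
  also have "\<dots> = 1" using P_gt1 by simp
  finally show ?thesis .
qed

lemma trunc_kfac: "u \<in> zp_units P \<Longrightarrow> 1 \<le> n \<Longrightarrow> zp_mul P (trunc (u n)) (kfac u n) = u"
  unfolding kfac_def by (intro mul_inv_cancel trunc_units units_carrier)

lemma decomp:
  assumes g: "((a, d), z) \<in> tt_carrier P" and n: "1 \<le> n"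
  shows "tt_mul P (((fst a, trunc (snd a n)), (fst d, trunc (snd d n))), z)
                  (((0, kfac (snd a) n), (0, kfac (snd d) n)), 1) = ((a, d), z)"
    and "(((0, kfac (snd a) n), (0, kfac (snd d) n)), 1) \<in> tt_K P n"
    and "(((fst a, trunc (snd a n)), (fst d, trunc (snd d n))), z) \<in> tt_carrier P"
proof -
  have c: "a \<in> qpx_carrier P" "d \<in> qpx_carrier P" "z \<in> {1, -1}" using g unfolding tt_mem by auto
  have u: "snd a \<in> zp_units P" "snd d \<in> zp_units P" using c carrier_snd by auto
  have c2: "(fst a, trunc (snd a n)) \<in> qpx_carrier P" "(fst d, trunc (snd d n)) \<in> qpx_carrier P"
    using trunc_units[OF u(1) n] trunc_units[OF u(2) n] by (simp_all add: qpx_mem)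
  have c3: "(0, kfac (snd a) n) \<in> qpx_carrier P" "(0, kfac (snd d) n) \<in> qpx_carrier P"
    using kfac_units[OF u(1) n] kfac_units[OF u(2) n] by (simp_all add: qpx_mem)
  have sqk: "sq (0, kfac (snd d) n)" by (rule sq_L1) (use kfac_1[OF u(2) n] in simp)
  have s: "tt_sigma P ((fst a, trunc (snd a n)), (fst d, trunc (snd d n))) ((0, kfac (snd a) n), (0, kfac (snd d) n)) = 1"
    using sigma_right[OF c2 c3 sqk] by simp
  show "tt_mul P (((fst a, trunc (snd a n)), (fst d, trunc (snd d n))), z)
                  (((0, kfac (snd a) n), (0, kfac (snd d) n)), 1) = ((a, d), z)"
    unfolding tt_mul_eq s using trunc_kfac[OF u(1) n] trunc_kfac[OF u(2) n]
    by (simp add: qmul_def)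
  show "(((0, kfac (snd a) n), (0, kfac (snd d) n)), 1) \<in> tt_K P n"
    unfolding tt_K_def using c3 kfac_n[OF u(1) n] kfac_n[OF u(2) n] by simp
  show "(((fst a, trunc (snd a n)), (fst d, trunc (snd d n))), z) \<in> tt_carrier P"
    unfolding tt_mem using c2 c(3) by simp
qed

lemma tt_K_mono:
  assumes "n \<le> m" shows "tt_K P m \<subseteq> tt_K P n"
proof
  fix t assume "t \<in> tt_K P m"
  then obtain a d where t: "t = ((a, d), 1)" "a \<in> qpx_carrier P" "d \<in> qpx_carrier P"
    "fst a = 0" "fst d = 0" "snd a m = 1 mod P ^ m" "snd d m = 1 mod P ^ m"
    unfolding tt_K_def by blast
  have "snd a n = snd a m mod P ^ n" "snd d n = snd d m mod P ^ n"
    using carrier_le[OF units_carrier[OF carrier_snd[OF t(2)]] assms]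
      carrier_le[OF units_carrier[OF carrier_snd[OF t(3)]] assms] by auto
  moreover have "(1::int) mod P ^ m mod P ^ n = 1 mod P ^ n"
    using assms by (intro mod_mod_cancel le_imp_power_dvd)
  ultimately have an: "snd a n = 1 mod P ^ n" "snd d n = 1 mod P ^ n" using t(6,7) by simp_all
  show "t \<in> tt_K P n" unfolding tt_K_def using t(1-5) an by blast
qed

end


(* ---- Final ---- *)


lemma tt_K_carrier: "t \<in> tt_K P n \<Longrightarrow> t \<in> tt_carrier P"
  unfolding tt_K_def tt_carrier_def by auto

theorem lemma4p13:
  fixes p :: nat
    and scale :: "'k::field \<Rightarrow> 'v::ab_group_add \<Rightarrow> 'v"
    and \<rho> :: "ttilde \<Rightarrow> 'v \<Rightarrow> 'v"
  assumes "prime p" and "odd p"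
    and "CHAR('k) = p" and "alg_closed TYPE('k)"
    and "vector_space scale"
    and "is_rep (int p) scale \<rho>"
    and "smooth_rep (int p) \<rho>"
    and "irreducible_rep (int p) scale \<rho>"
    and "genuine_rep (int p) scale \<rho>"
  shows "finite_dim scale"
proof -
  interpret padic p using assms(1,2) by unfold_locales
  interpret vs: vector_space scale by fact
  have lin: "\<And>g. g \<in> tt_carrier P \<Longrightarrow> Vector_Spaces.linear scale scale (\<rho> g)"
    and rone: "\<rho> (tt_one P) = id"
    and rmul: "\<And>g h. g \<in> tt_carrier P \<Longrightarrow> h \<in> tt_carrier P \<Longrightarrow> \<rho> (tt_mul P g h) = \<rho> g \<circ> \<rho> h"
    using assms(6) unfolding is_rep_def by auto
  have radd: "\<rho> g (a + b) = \<rho> g a + \<rho> g b" if "g \<in> tt_carrier P" for g a b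
    using lin[OF that] by (metis linear_iff_module_hom module_hom.add)
  have rscale: "\<rho> g (scale c a) = scale c (\<rho> g a)" if "g \<in> tt_carrier P" for g c a
    using lin[OF that] by (metis linear_iff_module_hom module_hom.scale)
  have rzero: "\<rho> g 0 = 0" if "g \<in> tt_carrier P" for g
    using radd[OF that, of 0 0] by simp
  have rmul': "\<rho> (tt_mul P g h) v = \<rho> g (\<rho> h v)" if "g \<in> tt_carrier P" "h \<in> tt_carrier P" for g h v
    using rmul[OF that] by simp
  have rone': "\<rho> (tt_one P) v = v" for v using rone by simp
  obtain w :: 'v where w0: "w \<noteq> 0" and irr: "\<And>S. vs.subspace S \<Longrightarrow> (\<forall>g\<in>tt_carrier P. \<forall>v\<in>S. \<rho> g v \<in> S) \<Longrightarrow> S = {0} \<or> S = UNIV"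
    using assms(8) unfolding irreducible_rep_def by blast
  obtain n0 where n0: "\<And>t. t \<in> tt_K P n0 \<Longrightarrow> \<rho> t w = w"
    using assms(7) unfolding smooth_rep_def by blast
  define n where "n = max n0 1"
  have n1: "1 \<le> n" unfolding n_def by simp
  have fixw: "\<rho> t w = w" if "t \<in> tt_K P n" for t
  proof -
    have "tt_K P n \<subseteq> tt_K P n0" by (rule tt_K_mono) (simp add: n_def)
    thus ?thesis using that n0 by blast
  qed

  text \<open>Central operators\<close>
  define Cen where "Cen C \<longleftrightarrow> (\<forall>a b. C (a + b) = C a + C b) \<and> (\<forall>c a. C (scale c a) = scale c (C a))
      \<and> (\<forall>g\<in>tt_carrier P. \<forall>v. C (\<rho> g v) = \<rho> g (C v))" for C
  have QQc: "\<rho> (QQ e1 e2) (\<rho> g v) = \<rho> g (\<rho> (QQ e1 e2) v)"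
    if "even e1" "even e2" "g \<in> tt_carrier P" for e1 e2 g v
    using rmul'[OF QQ_carrier that(3)] rmul'[OF that(3) QQ_carrier] QQ_comm[OF that] by metis
  have CenQQ: "Cen (\<rho> (QQ e1 e2))" if "even e1" "even e2" for e1 e2
    unfolding Cen_def using radd[OF QQ_carrier] rscale[OF QQ_carrier] QQc[OF that] by blast
  define X where "X = \<rho> (QQ 2 0)"
  define X' where "X' = \<rho> (QQ (-2) 0)"
  define Y where "Y = \<rho> (QQ 0 2)"
  define Y' where "Y' = \<rho> (QQ 0 (-2))"
  have QQinv: "\<rho> (QQ e1 e2) (\<rho> (QQ (- e1) (- e2)) v) = v" if "even e1" "even e2" for e1 e2 v
    using rmul'[OF QQ_carrier QQ_carrier, of e1 e2 "- e1" "- e2" v] QQ_inv[OF that] rone' by simp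
  have XX': "X (X' v) = v" for v unfolding X_def X'_def using QQinv[of 2 0 v] by simp
  have X'X: "X' (X v) = v" for v unfolding X_def X'_def using QQinv[of "-2" 0 v] by simp
  have YY': "Y (Y' v) = v" for v unfolding Y_def Y'_def using QQinv[of 0 2 v] by simp
  have Y'Y: "Y' (Y v) = v" for v unfolding Y_def Y'_def using QQinv[of 0 "-2" v] by simp
  have XY: "X (Y v) = Y (X v)" for v unfolding X_def Y_def by (rule QQc) (simp_all add: QQ_carrier)
  have X'Y: "X' (Y v) = Y (X' v)" for v unfolding X'_def Y_def by (rule QQc) (simp_all add: QQ_carrier)
  have XY': "X (Y' v) = Y' (X v)" for v unfolding X_def Y'_def by (rule QQc) (simp_all add: QQ_carrier)
  have X'Y': "X' (Y' v) = Y' (X' v)" for v unfolding X'_def Y'_def by (rule QQc) (simp_all add: QQ_carrier)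

  have Schur: "(\<forall>v. C v = 0) \<or> ((\<forall>v. C v = 0 \<longrightarrow> v = 0) \<and> (\<forall>v. \<exists>x. C x = v))" if "Cen C" for C
  proof -
    have Cadd: "C (a + b) = C a + C b" and Cscale: "C (scale c a) = scale c (C a)"
      and Cg: "g \<in> tt_carrier P \<Longrightarrow> C (\<rho> g v) = \<rho> g (C v)" for a b c g v
      using that unfolding Cen_def by auto
    have C0: "C 0 = 0" using Cadd[of 0 0] by simp
    have sk: "vs.subspace {v. C v = 0}" unfolding vs.subspace_def by (simp add: C0 Cadd Cscale)
    have ik: "\<forall>g\<in>tt_carrier P. \<forall>v\<in>{v. C v = 0}. \<rho> g v \<in> {v. C v = 0}" by (simp add: Cg rzero)
    have sr: "vs.subspace (range C)" unfolding vs.subspace_def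
    proof (intro conjI ballI allI)
      show "0 \<in> range C" using C0 by (metis rangeI)
    next
      fix x y assume "x \<in> range C" "y \<in> range C"
      then obtain a b where ab: "x = C a" "y = C b" by blast
      show "x + y \<in> range C" unfolding ab Cadd[symmetric] by (rule rangeI)
    next
      fix c x assume "x \<in> range C"
      then obtain a where a: "x = C a" by blast
      show "scale c x \<in> range C" unfolding a Cscale[symmetric] by (rule rangeI)
    qed
    have ir: "\<forall>g\<in>tt_carrier P. \<forall>v\<in>range C. \<rho> g v \<in> range C"
    proof (intro ballI)
      fix g x assume g: "g \<in> tt_carrier P" and "x \<in> range C"
      then obtain a where "x = C a" by blast
      thus "\<rho> g x \<in> range C" using Cg[OF g, of a] by (metis rangeI)
    qed
    show ?thesis
    proof (cases "{v. C v = 0} = UNIV")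
      case True thus ?thesis by auto
    next
      case False
      hence k0: "{v. C v = 0} = {0}" using irr[OF sk ik] by blast
      have "range C \<noteq> {0}"
      proof
        assume "range C = {0}"
        hence "{v. C v = 0} = UNIV" by auto
        thus False using False by simp
      qed
      hence rU: "range C = UNIV" using irr[OF sr ir] by blast
      have inj: "\<forall>v. C v = 0 \<longrightarrow> v = 0" using k0 by blast
      have su: "\<forall>v. \<exists>x. C x = v"
      proof
        fix v :: 'v
        have "v \<in> range C" using rU by simp
        then obtain x where "v = C x" by blast
        thus "\<exists>x. C x = v" by blast
      qed
      show ?thesis using inj su by blast
    qed
  qed

  text \<open>Generators\<close>
  define H where "H = (\<lambda>(e1, e2, c1, c2, z). (((e1, trunc c1), (e2, trunc c2)), z)) `
      ({0, 1 :: int} \<times> {0, 1 :: int} \<times> {0..<P ^ n} \<times> {0..<P ^ n} \<times> {1, -1 :: int})"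
  have finH: "finite H" unfolding H_def by simp
  define VS where "VS = (\<lambda>h. \<rho> h w) ` H"
  have finVS: "finite VS" unfolding VS_def using finH by simp
  obtain N :: nat and u :: "nat \<Rightarrow> 'v" where VSu: "VS = u ` {i. i < N}"
    using finite_imp_nat_seg_image_inj_on[OF finVS] by blast

  have orbit: "Pr (\<rho> g w)" if g: "g \<in> tt_carrier P"
    and pu: "\<And>i. i < N \<Longrightarrow> Pr (u i)"
    and pX: "\<And>a. Pr a \<Longrightarrow> Pr (X a)" and pX': "\<And>a. Pr a \<Longrightarrow> Pr (X' a)"
    and pY: "\<And>a. Pr a \<Longrightarrow> Pr (Y a)" and pY': "\<And>a. Pr a \<Longrightarrow> Pr (Y' a)" for Pr g
  proof -
    have base: "Pr (\<rho> g0 w)" if g0: "g0 \<in> tt_carrier P" and ev: "g0 = ((a, d), z)" "fst a \<in> {0, 1}" "fst d \<in> {0, 1}" for g0 a d z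
    proof -
      have gc: "((a, d), z) \<in> tt_carrier P" using g0 ev by simp
      define h where "h = (((fst a, trunc (snd a n)), (fst d, trunc (snd d n))), z)"
      define k where "k = ((((0::int), kfac (snd a) n), ((0::int), kfac (snd d) n)), (1::int))"
      have hk: "tt_mul P h k = ((a, d), z)" and kK: "k \<in> tt_K P n" and hc: "h \<in> tt_carrier P"
        unfolding h_def k_def using decomp[OF gc n1] by auto
      have "\<rho> g0 w = \<rho> h (\<rho> k w)" using rmul'[OF hc tt_K_carrier[OF kK]] hk ev(1) by simp
      also have "\<rho> k w = w" by (rule fixw[OF kK])
      finally have e: "\<rho> g0 w = \<rho> h w" .
      have "snd a \<in> zp_units P" "snd d \<in> zp_units P" "z \<in> {1, -1}"
        using gc unfolding tt_mem by (auto simp: carrier_snd)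
      hence "snd a n \<in> {0..<P ^ n}" "snd d n \<in> {0..<P ^ n}"
        using carrier_simps(1,2)[OF units_carrier] by auto
      hence "h \<in> H" unfolding H_def h_def using ev \<open>z \<in> {1, -1}\<close>
        by (auto intro!: image_eqI[of _ _ "(fst a, fst d, snd a n, snd d n, z)"])
      hence "\<rho> h w \<in> VS" unfolding VS_def by blast
      then obtain i where "i < N" "\<rho> h w = u i" using VSu by auto
      thus ?thesis using e pu by simp
    qed
    have shiftA: "Pr (\<rho> (((fst a + 2 * j, snd a), d), z) w)"
      if gc: "((a, d), z) \<in> tt_carrier P" and pr: "Pr (\<rho> ((a, d), z) w)" for a d z and j :: int
    proof (induction j rule: int_induct[where k = 0])
      case base thus ?case using pr by simp
    next
      case (step1 i)
      have c: "(((fst a + 2 * i, snd a), d), z) \<in> tt_carrier P"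
        using QQ_shift[of "2 * i" 0 a d z] gc by simp
      have "tt_mul P (QQ 2 0) (((fst a + 2 * i, snd a), d), z) = (((fst a + 2 * (i + 1), snd a), d), z)"
        using mul_QQ_left[of 2 0 "(fst a + 2 * i, snd a)" d z] c by (simp add: algebra_simps)
      hence "\<rho> (((fst a + 2 * (i + 1), snd a), d), z) w = X (\<rho> (((fst a + 2 * i, snd a), d), z) w)"
        unfolding X_def using rmul'[OF QQ_carrier c] by metis
      thus ?case using pX step1.IH by simp
    next
      case (step2 i)
      have c: "(((fst a + 2 * i, snd a), d), z) \<in> tt_carrier P"
        using QQ_shift[of "2 * i" 0 a d z] gc by simp
      have "tt_mul P (QQ (-2) 0) (((fst a + 2 * i, snd a), d), z) = (((fst a + 2 * (i - 1), snd a), d), z)"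
        using mul_QQ_left[of "-2" 0 "(fst a + 2 * i, snd a)" d z] c by (simp add: algebra_simps)
      hence "\<rho> (((fst a + 2 * (i - 1), snd a), d), z) w = X' (\<rho> (((fst a + 2 * i, snd a), d), z) w)"
        unfolding X'_def using rmul'[OF QQ_carrier c] by metis
      thus ?case using pX' step2.IH by simp
    qed
    have shiftD: "Pr (\<rho> ((a, (fst d + 2 * j, snd d)), z) w)"
      if gc: "((a, d), z) \<in> tt_carrier P" and pr: "Pr (\<rho> ((a, d), z) w)" for a d z and j :: int
    proof (induction j rule: int_induct[where k = 0])
      case base thus ?case using pr by simp
    next
      case (step1 i)
      have c: "((a, (fst d + 2 * i, snd d)), z) \<in> tt_carrier P"
        using QQ_shift[of 0 "2 * i" a d z] gc by simp
      have "tt_mul P (QQ 0 2) ((a, (fst d + 2 * i, snd d)), z) = ((a, (fst d + 2 * (i + 1), snd d)), z)"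
        using mul_QQ_left[of 0 2 a "(fst d + 2 * i, snd d)" z] c by (simp add: algebra_simps)
      hence "\<rho> ((a, (fst d + 2 * (i + 1), snd d)), z) w = Y (\<rho> ((a, (fst d + 2 * i, snd d)), z) w)"
        unfolding Y_def using rmul'[OF QQ_carrier c] by metis
      thus ?case using pY step1.IH by simp
    next
      case (step2 i)
      have c: "((a, (fst d + 2 * i, snd d)), z) \<in> tt_carrier P"
        using QQ_shift[of 0 "2 * i" a d z] gc by simp
      have "tt_mul P (QQ 0 (-2)) ((a, (fst d + 2 * i, snd d)), z) = ((a, (fst d + 2 * (i - 1), snd d)), z)"
        using mul_QQ_left[of 0 "-2" a "(fst d + 2 * i, snd d)" z] c by (simp add: algebra_simps)
      hence "\<rho> ((a, (fst d + 2 * (i - 1), snd d)), z) w = Y' (\<rho> ((a, (fst d + 2 * i, snd d)), z) w)"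
        unfolding Y'_def using rmul'[OF QQ_carrier c] by metis
      thus ?case using pY' step2.IH by simp
    qed
    obtain a d z where gz: "g = ((a, d), z)" by (metis prod.collapse)
    have gc: "((a, d), z) \<in> tt_carrier P" using g gz by simp
    have ca: "a \<in> qpx_carrier P" "d \<in> qpx_carrier P" "z \<in> {1, -1}" using gc unfolding tt_mem by auto
    define a0 where "a0 = (fst a mod 2, snd a)"
    define d0 where "d0 = (fst d mod 2, snd d)"
    have g0c: "((a0, d0), z) \<in> tt_carrier P"
      unfolding tt_mem a0_def d0_def using ca carrier_snd by (auto simp: qpx_mem)
    have m2: "x mod 2 \<in> {0, 1 :: int}" for x :: int
      by (cases "even x") (auto simp: even_iff_mod_2_eq_zero odd_iff_mod_2_eq_one)
    have "fst a0 \<in> {0, 1}" "fst d0 \<in> {0, 1}" unfolding a0_def d0_def using m2 by auto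
    hence p0: "Pr (\<rho> ((a0, d0), z) w)" by (rule base[OF g0c refl])
    have p1: "Pr (\<rho> (((fst a0 + 2 * (fst a div 2), snd a0), d0), z) w)" by (rule shiftA[OF g0c p0])
    have a_eq: "(fst a0 + 2 * (fst a div 2), snd a0) = a" unfolding a0_def by simp
    have g1c: "((a, d0), z) \<in> tt_carrier P" using g0c ca unfolding tt_mem by simp
    have p2: "Pr (\<rho> ((a, (fst d0 + 2 * (fst d div 2), snd d0)), z) w)"
      by (rule shiftD[OF g1c]) (use p1 a_eq in simp)
    have d_eq: "(fst d0 + 2 * (fst d div 2), snd d0) = d" unfolding d0_def by simp
    show ?thesis using p2 unfolding d_eq gz .
  qed

  have genH: "Pr v" if pu: "\<And>i. i < N \<Longrightarrow> Pr (u i)"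
    and padd: "\<And>a b. Pr a \<Longrightarrow> Pr b \<Longrightarrow> Pr (a + b)" and pscale: "\<And>c a. Pr a \<Longrightarrow> Pr (scale c a)"
    and p0: "Pr 0"
    and pX: "\<And>a. Pr a \<Longrightarrow> Pr (X a)" and pX': "\<And>a. Pr a \<Longrightarrow> Pr (X' a)"
    and pY: "\<And>a. Pr a \<Longrightarrow> Pr (Y a)" and pY': "\<And>a. Pr a \<Longrightarrow> Pr (Y' a)" for Pr v
  proof -
    define Orb where "Orb = (\<lambda>g. \<rho> g w) ` tt_carrier P"
    have sub: "vs.subspace (Collect Pr)" unfolding vs.subspace_def using padd pscale p0 by auto
    have inv: "\<forall>g\<in>tt_carrier P. \<forall>x\<in>vs.span Orb. \<rho> g x \<in> vs.span Orb"
    proof (intro ballI)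
      fix g x assume g: "g \<in> tt_carrier P" and x: "x \<in> vs.span Orb"
      show "\<rho> g x \<in> vs.span Orb"
      proof (rule vs.span_induct[OF x])
        show "vs.subspace {x. \<rho> g x \<in> vs.span Orb}" unfolding vs.subspace_def
          by (simp add: rzero[OF g] radd[OF g] rscale[OF g] vs.span_zero vs.span_add vs.span_scale)
        fix y assume "y \<in> Orb"
        then obtain h where h: "h \<in> tt_carrier P" "y = \<rho> h w" unfolding Orb_def by blast
        have "\<rho> g y = \<rho> (tt_mul P g h) w" using rmul'[OF g h(1)] h(2) by simp
        moreover have "tt_mul P g h \<in> tt_carrier P" using g h(1) by (rule tt_mul_carrier)
        ultimately have "\<rho> g y \<in> Orb" unfolding Orb_def by blast
        thus "\<rho> g y \<in> vs.span Orb" by (rule vs.span_base)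
      qed
    qed
    have "w \<in> vs.span Orb" unfolding Orb_def using tt_one_carrier rone'[of w]
      by (intro vs.span_base) (metis image_eqI)
    hence "vs.span Orb \<noteq> {0}" using w0 by blast
    hence spanU: "vs.span Orb = UNIV" using irr[OF vs.subspace_span inv] by blast
    have "Orb \<subseteq> Collect Pr" unfolding Orb_def using orbit[OF _ pu pX pX' pY pY'] by blast
    hence "vs.span Orb \<subseteq> Collect Pr" using sub by (rule vs.span_minimal)
    thus "Pr v" using spanU by auto
  qed

  have linQ: "\<rho> (QQ e1 e2) (a + b) = \<rho> (QQ e1 e2) a + \<rho> (QQ e1 e2) b"
    "\<rho> (QQ e1 e2) (scale c a) = scale c (\<rho> (QQ e1 e2) a)" for e1 e2 a b c
    using radd[OF QQ_carrier] rscale[OF QQ_carrier] by auto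

  have cinst: "core scale X X' Y Y' Cen u N"
  proof (unfold_locales)
    show "\<And>q :: 'k poly. 0 < Polynomial.degree q \<Longrightarrow> \<exists>x. poly q x = 0" using assms(4) unfolding alg_closed_def by blast
    show "Cen (\<lambda>v. v)" unfolding Cen_def by simp
    show "Cen (\<lambda>v. 0)" unfolding Cen_def by (simp add: rzero)
    show "Cen (\<lambda>v. f (g v))" if "Cen f" "Cen g" for f g using that unfolding Cen_def by simp
    show "Cen (\<lambda>v. f v + g v)" if "Cen f" "Cen g" for f g using that unfolding Cen_def
      by (simp add: radd algebra_simps vs.scale_right_distrib)
    show "Cen (scale c)" for c unfolding Cen_def
      by (simp add: vs.scale_right_distrib rscale mult.commute)
    show "Cen X" unfolding X_def by (rule CenQQ) simp_all
    show "Cen Y" unfolding Y_def by (rule CenQQ) simp_all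
    show "\<And>C. Cen C \<Longrightarrow> (\<forall>v. C v = 0) \<or> ((\<forall>v. C v = 0 \<longrightarrow> v = 0) \<and> (\<forall>w. \<exists>v. C v = w))"
      using Schur by blast
    show "\<And>Pr v. (\<And>i. i < N \<Longrightarrow> Pr (u i)) \<Longrightarrow> (\<And>a b. Pr a \<Longrightarrow> Pr b \<Longrightarrow> Pr (a + b))
        \<Longrightarrow> (\<And>c a. Pr a \<Longrightarrow> Pr (scale c a)) \<Longrightarrow> Pr 0
        \<Longrightarrow> (\<And>a. Pr a \<Longrightarrow> Pr (X a)) \<Longrightarrow> (\<And>a. Pr a \<Longrightarrow> Pr (X' a))
        \<Longrightarrow> (\<And>a. Pr a \<Longrightarrow> Pr (Y a)) \<Longrightarrow> (\<And>a. Pr a \<Longrightarrow> Pr (Y' a)) \<Longrightarrow> Pr v"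
      by (rule genH)
  qed (simp_all add: vs.scale_right_distrib vs.scale_left_distrib X_def X'_def Y_def Y'_def linQ XX'[unfolded X_def X'_def] X'X[unfolded X_def X'_def]
        YY'[unfolded Y_def Y'_def] Y'Y[unfolded Y_def Y'_def] XY[unfolded X_def Y_def]
        X'Y[unfolded X'_def Y_def] XY'[unfolded X_def Y'_def] X'Y'[unfolded X'_def Y'_def])

  obtain lam mu where Xs: "\<And>v. X v = scale lam v" and Ys: "\<And>v. Y v = scale mu v"
    using core_both[OF cinst] by blast

  have inv_span: "T' a \<in> vs.span VS"
    if a: "a \<in> vs.span VS" and TT': "\<And>v. T (T' v) = v" and Ts: "\<And>v. T v = scale l v"
    for T T' :: "'v \<Rightarrow> 'v" and l a
  proof (cases "l = 0")
    case True
    have "T' a = T (T' (T' a))" using TT' by simp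
    also have "\<dots> = 0" using Ts True by simp
    finally show ?thesis by (simp add: vs.span_zero)
  next
    case False
    have "a = scale l (T' a)" using TT'[of a] Ts[of "T' a"] by simp
    hence "scale (inverse l) a = scale (inverse l) (scale l (T' a))" by (rule arg_cong)
    also have "\<dots> = scale (inverse l * l) (T' a)" by (rule vs.scale_scale)
    also have "\<dots> = T' a" using False by simp
    finally have "scale (inverse l) a = T' a" .
    thus ?thesis using vs.span_scale[OF a, of "inverse l"] by simp
  qed

  have "v \<in> vs.span VS" for v
  proof (rule genH[of "\<lambda>v. v \<in> vs.span VS"])
    show "u i \<in> vs.span VS" if "i < N" for i using VSu that by (auto intro: vs.span_base)
    show "a + b \<in> vs.span VS" if "a \<in> vs.span VS" "b \<in> vs.span VS" for a b using that by (rule vs.span_add)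
    show "scale c a \<in> vs.span VS" if "a \<in> vs.span VS" for c a using that by (rule vs.span_scale)
    show "0 \<in> vs.span VS" by (rule vs.span_zero)
    show "X a \<in> vs.span VS" if "a \<in> vs.span VS" for a unfolding Xs using that by (rule vs.span_scale)
    show "Y a \<in> vs.span VS" if "a \<in> vs.span VS" for a unfolding Ys using that by (rule vs.span_scale)
    show "X' a \<in> vs.span VS" if "a \<in> vs.span VS" for a by (rule inv_span[OF that XX' Xs])
    show "Y' a \<in> vs.span VS" if "a \<in> vs.span VS" for a by (rule inv_span[OF that YY' Ys])
  qed
  thus ?thesis unfolding finite_dim_def using finVS by blast
qed


end
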